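(* Let $k$ be a dot-product kernel on $\mathbb S^d$ with Mercer decomposition $k(x,y)=\sum_{n=0}^\infty\mu_n\sum_{l=1}^{a_n}Y_{n,l}(x)Y_{n,l}(y)$, and suppose $\mu_n\asymp n^{-d\beta}$ for some $\beta>1$. Then, with respect to the uniform measure $\sigma$, the eigenvalue decay rate of the corresponding RKHS is $\beta$ (i.e. its eigenvalues $\lambda_i$ in non-increasing order satisfy $ci^{-\beta}\le\lambda_i\le Ci^{-\beta}$ for some $c,C>0$), and its embedding index is $\alpha_0=\frac1\beta$.
   Context: $\mathbb S^d=\{x\in\mathbb R^{d+1}:\|x\|=1\}$ with uniform probability measure $\sigma$. A dot-product kernel is $k(x,y)=f(\langle x,y\rangle)$. $\{Y_{n,l}:1\le l\le a_n,\ n\ge0\}$ is an orthonormal basis of $L^2(\mathbb S^d,\sigma)$ of spherical harmonics: $Y_{n,l}$ lie in the space $\mathcal H_n(\mathbb S^d)$ of (restrictions of) homogeneous harmonic polynomials of degree $n$, and $a_n=\dim\mathcal H_n(\mathbb S^d)=\binom{n+d}{n}-\binom{n-2+d}{n-2}$. For an RKHS $\mathcal H$ with kernel $k$ whose integral operator on $L^2(\mathbb S^d,\sigma)$ has eigenvalues $\lambda_i$ (non-increasing, with multiplicity) and orthonormal eigenfunctions $e_i$, let $M_\alpha$ be the smallest $A\ge0$ with $\sum_i\lambda_i^\alpha e_i(x)^2\le A^2$ for $\sigma$-a.e. $x$ ($=\infty$ if none); if the eigenvalue decay rate is $\beta$, the embedding index is $\alpha_0=\inf\{\alpha\in[\frac1\beta,1]:M_\alpha<\infty\}$.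 $a_n\asymp b_n$ means $ca_n\le b_n\le Ca_n$ for constants $c,C>0$. *)

theory Defs
  imports "HOL-Analysis.Analysis"
begin

text \<open>Uniform probability measure on the unit sphere S^d of R^(d+1) = real^'n
  (d+1 = CARD('n)): push-forward of the normalised Lebesgue measure on the unit ball
  under the radial projection x \<mapsto> x / norm x (the origin is a null set).\<close>
definition sphere_measure :: "(real ^ 'n) measure" where
  "sphere_measure =
     distr (uniform_measure lborel (ball 0 1)) (restrict_space borel (sphere 0 1))
       (\<lambda>x. if x = 0 then (SOME y. y \<in> sphere (0::real^'n) 1) else sgn x)"

definition hom_poly :: "nat \<Rightarrow> (real ^ 'n \<Rightarrow> real) \<Rightarrow> bool" where
  "hom_poly m p \<longleftrightarrow>
     (\<exists>c :: ('n \<Rightarrow> nat) \<Rightarrow> real. \<forall>x.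
        p x = (\<Sum>\<alpha>\<in>{\<alpha>. sum \<alpha> UNIV = m}. c \<alpha> * (\<Prod>i\<in>UNIV. (x $ i) ^ (\<alpha> i))))"

definition laplacian :: "(real ^ 'n \<Rightarrow> real) \<Rightarrow> real ^ 'n \<Rightarrow> real" where
  "laplacian p x = (\<Sum>i\<in>UNIV. (deriv ^^ 2) (\<lambda>t. p (x + t *\<^sub>R axis i 1)) 0)"

definition harmonic :: "(real ^ 'n \<Rightarrow> real) \<Rightarrow> bool" where
  "harmonic p \<longleftrightarrow> (\<forall>x. laplacian p x = 0)"

definition sph_harm_space :: "nat \<Rightarrow> (real ^ 'n \<Rightarrow> real) set" where
  "sph_harm_space m =
     {Y. \<exists>p. hom_poly m p \<and> harmonic p \<and> (\<forall>x\<in>sphere 0 1. Y x = p x)}"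

definition harm_dim :: "nat \<Rightarrow> nat \<Rightarrow> nat" where
  "harm_dim d n = (n + d choose n) - (if n \<ge> 2 then (n - 2 + d choose (n - 2)) else 0)"

text \<open>(lam, e) lists the (positive) eigenvalues, non-increasing and with multiplicity,
  together with orthonormal eigenfunctions, of the integral operator of the kernel k
  on L^2(M): the e_i are orthonormal eigenfunctions and every f in L^2 orthogonal to
  all e_i lies in the kernel of the integral operator.\<close>
definition spectral_system ::
  "'a measure \<Rightarrow> ('a \<Rightarrow> 'a \<Rightarrow> real) \<Rightarrow> (nat \<Rightarrow> real) \<Rightarrow> (nat \<Rightarrow> 'a \<Rightarrow> real) \<Rightarrow> bool" where
  "spectral_system M k lam e \<longleftrightarrow>
     (\<forall>i. e i \<in> borel_measurable M \<and> integrable M (\<lambda>x. (e i x)\<^sup>2)) \<and>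
     (\<forall>i j. (\<integral>x. e i x * e j x \<partial>M) = (if i = j then 1 else 0)) \<and>
     antimono lam \<and> (\<forall>i. lam i > 0) \<and>
     (\<forall>i. AE x in M. (\<integral>y. k x y * e i y \<partial>M) = lam i * e i x) \<and>
     (\<forall>f \<in> borel_measurable M. integrable M (\<lambda>x. (f x)\<^sup>2) \<longrightarrow>
         (\<forall>i. (\<integral>x. f x * e i x \<partial>M) = 0) \<longrightarrow>
         (AE x in M. (\<integral>y. k x y * f y \<partial>M) = 0))"

text \<open>Eigenvalue decay rate beta: c i^(-beta) \<le> lam_i \<le> C i^(-beta), i = 1,2,...
  (lam is indexed from 0, so lam i is the (i+1)-th eigenvalue).\<close>
definition eigenvalue_decay_rate :: "(nat \<Rightarrow> real) \<Rightarrow> real \<Rightarrow> bool" where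
  "eigenvalue_decay_rate lam \<beta> \<longleftrightarrow>
     (\<exists>c C. c > 0 \<and> C > 0 \<and>
        (\<forall>i. c * real (Suc i) powr (-\<beta>) \<le> lam i \<and> lam i \<le> C * real (Suc i) powr (-\<beta>)))"

text \<open>M_alpha = smallest A \<ge> 0 with sum_i lam_i^alpha e_i(x)^2 \<le> A^2 a.e. (\<infinity> if none).\<close>
definition embedding_M ::
  "'a measure \<Rightarrow> (nat \<Rightarrow> real) \<Rightarrow> (nat \<Rightarrow> 'a \<Rightarrow> real) \<Rightarrow> real \<Rightarrow> ennreal" where
  "embedding_M M lam e \<alpha> =
     Inf {A. AE x in M. (\<Sum>i. ennreal (lam i powr \<alpha> * (e i x)\<^sup>2)) \<le> A\<^sup>2}"

definition embedding_index ::
  "'a measure \<Rightarrow> (nat \<Rightarrow> real) \<Rightarrow> (nat \<Rightarrow> 'a \<Rightarrow> real) \<Rightarrow> real \<Rightarrow> real" where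
  "embedding_index M lam e \<beta> = Inf {\<alpha> \<in> {1/\<beta>..1}. embedding_M M lam e \<alpha> < top}"

end

theory Submission
  imports Defs "HOL-Probability.Probability"
begin

typedef 'n wo = "UNIV :: 'n set" by simp

instance wo :: (finite) finite
proof
  have "(UNIV :: 'a wo set) = Abs_wo ` UNIV"
    by (metis Rep_wo_inverse UNIV_I image_eqI subsetI subset_antisym)
  then show "finite (UNIV :: 'a wo set)" by (metis finite_imageI finite_class.finite_UNIV)
qed

instantiation wo :: (finite) linorder
begin
definition less_eq_wo :: "'a wo \<Rightarrow> 'a wo \<Rightarrow> bool" where
  "less_eq_wo x y \<longleftrightarrow> to_nat (Rep_wo x) \<le> to_nat (Rep_wo y)"
definition less_wo :: "'a wo \<Rightarrow> 'a wo \<Rightarrow> bool" where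
  "less_wo x y \<longleftrightarrow> to_nat (Rep_wo x) < to_nat (Rep_wo y)"
instance
proof
  fix x y :: "'a wo"
  show "x \<le> y \<Longrightarrow> y \<le> x \<Longrightarrow> x = y"
    unfolding less_eq_wo_def by (metis Rep_wo_inject antisym to_nat_split)
qed (auto simp: less_eq_wo_def less_wo_def)
end

instance wo :: (finite) wellorder
proof
  fix P :: "'a wo \<Rightarrow> bool" and a
  assume H: "\<And>x. (\<And>y. y < x \<Longrightarrow> P y) \<Longrightarrow> P x"
  have "\<forall>x. to_nat (Rep_wo x) = m \<longrightarrow> P x" for m
  proof (induction m rule: less_induct)
    case (less m)
    then show ?case using H unfolding less_wo_def by blast
  qed
  then show "P a" by blast
qed

lemma prod_Basis_cart: "(\<Prod>b\<in>Basis. (v::real^'n) \<bullet> b) = (\<Prod>i\<in>UNIV. v $ i)"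
proof -
  have B: "Basis = (\<lambda>i. axis i (1::real)) ` (UNIV :: 'n set)"
    by (auto simp: Basis_vec_def)
  have I: "inj (\<lambda>i. axis i (1::real) :: real^'n)"
    by (auto simp: inj_def axis_eq_axis)
  show ?thesis
    unfolding B prod.reindex[OF I] by (simp add: inner_axis o_def)
qed

definition Phi :: "real^'n \<Rightarrow> real^('n wo)" where
  "Phi x = (\<chi> i. x $ Rep_wo i)"
definition Psi :: "real^('n wo) \<Rightarrow> real^'n" where
  "Psi y = (\<chi> i. y $ Abs_wo i)"

lemma Phi_Psi[simp]: "Phi (Psi y) = y" "Psi (Phi x) = x"
  by (auto simp: Phi_def Psi_def vec_eq_iff Rep_wo_inverse Abs_wo_inverse)

lemma linear_Phi: "linear Phi" and linear_Psi: "linear Psi"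
  by (auto intro!: linearI simp: Phi_def Psi_def vec_eq_iff)

lemma Phi_meas[measurable]: "Phi \<in> borel_measurable borel"
  and Psi_meas[measurable]: "Psi \<in> borel_measurable borel"
  using linear_Phi linear_Psi linear_conv_bounded_linear
  by (auto intro!: borel_measurable_continuous_onI linear_continuous_on)

lemma distr_Phi: "distr lborel borel (Phi :: real^'n \<Rightarrow> _) = lborel"
proof (rule lborel_eqI[symmetric])
  fix l u :: "real^('n wo)"
  assume le: "\<And>b. b \<in> Basis \<Longrightarrow> l \<bullet> b \<le> u \<bullet> b"
  have le': "l $ i \<le> u $ i" for i using le[of "axis i 1"] by (auto simp: Basis_vec_def cart_eq_inner_axis)
  have pre: "Phi -` box l u = box (Psi l) (Psi u)"
    apply (auto simp: mem_box_cart Phi_def Psi_def)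
    by (metis Abs_wo_inverse UNIV_I Rep_wo_inverse)+
  have "(\<Prod>i\<in>UNIV. (Psi u - Psi l) $ i) = (\<Prod>i\<in>UNIV. (u - l) $ i)"
  proof -
    have "(\<Prod>i\<in>UNIV. (Psi u - Psi l) $ i) = (\<Prod>i\<in>UNIV. (u - l) $ (Abs_wo i))"
      by (simp add: Psi_def)
    also have "\<dots> = (\<Prod>i\<in>Abs_wo ` UNIV. (u - l) $ i)"
      by (simp add: prod.reindex inj_def Abs_wo_inject)
    also have "Abs_wo ` UNIV = (UNIV :: 'n wo set)"
      by (metis Rep_wo_inverse UNIV_I image_eqI subsetI subset_antisym)
    finally show ?thesis .
  qed
  moreover have "\<forall>b\<in>Basis. Psi l \<bullet> b \<le> Psi u \<bullet> b"
    using le' by (auto simp: Basis_vec_def inner_axis Psi_def)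
  ultimately show "emeasure (distr lborel borel Phi) (box l u) = (\<Prod>b\<in>Basis. (u - l) \<bullet> b)"
    by (simp add: emeasure_distr pre emeasure_lborel_box_eq prod_Basis_cart)
qed simp


lemma bij_Rep_wo: "bij_betw (Rep_wo :: 'n wo \<Rightarrow> 'n) UNIV UNIV"
  unfolding bij_betw_def
  using type_definition.Rep_range[OF type_definition_wo]
  by (auto simp: inj_def Rep_wo_inject)

lemma inner_Phi: "Phi x \<bullet> Phi y = x \<bullet> y"
proof -
  have "Phi x \<bullet> Phi y = (\<Sum>i\<in>UNIV. x $ Rep_wo i * y $ Rep_wo i)"
    by (simp add: inner_vec_def Phi_def)
  also have "\<dots> = (\<Sum>i\<in>UNIV. x $ i * y $ i)"
    by (rule sum.reindex_bij_betw[OF bij_Rep_wo])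
  finally show ?thesis by (simp add: inner_vec_def)
qed

lemma inner_Psi: "Psi x \<bullet> Psi y = x \<bullet> y"
  by (metis Phi_Psi(1) inner_Phi)

lemma orth_wo_emeasure:
  fixes R :: "real^('n::finite wo) \<Rightarrow> real^('n wo)"
  assumes R: "orthogonal_transformation R" and D: "bounded D" "D \<in> sets borel"
  shows "emeasure lborel (R -` D) = emeasure lborel D"
proof -
  let ?R' = "inv R"
  have R': "orthogonal_transformation ?R'" using orthogonal_transformation_inv[OF R] .
  have eq: "R -` D = ?R' ` D"
    using orthogonal_transformation_bij[OF R] by (simp add: bij_vimage_eq_inv_image)
  have Rm: "R \<in> borel_measurable borel"
    using R orthogonal_transformation_linear linear_conv_bounded_linear
    by (auto intro!: borel_measurable_continuous_onI linear_continuous_on)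
  have Db: "R -` D \<in> sets borel"
    using measurable_sets_borel[OF Rm D(2)] by simp
  have bdd: "bounded (R -` D)"
    unfolding eq using R' D(1) orthogonal_transformation_linear linear_conv_bounded_linear
    bounded_linear_image by blast
  have Dl: "D \<in> lmeasurable"
    using D by (intro bounded_set_imp_lmeasurable) auto
  have "measure lebesgue (?R' ` D) = \<bar>det (matrix ?R')\<bar> * measure lebesgue D"
    by (rule measure_linear_image) (use R' Dl orthogonal_transformation_linear in auto)
  then have "measure lebesgue (R -` D) = measure lebesgue D"
    using R' eq by simp
  then have m: "measure lborel (R -` D) = measure lborel D"
    using Db D by simp
  have f1: "emeasure lborel (R -` D) \<noteq> top" using emeasure_bounded_finite[OF bdd] by simp
  have f2: "emeasure lborel D \<noteq> top" using emeasure_bounded_finite[OF D(1)] by simp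
  show ?thesis using m f1 f2 by (simp add: emeasure_eq_ennreal_measure)
qed

lemma lborel_orth:
  fixes Q :: "real^'n::finite \<Rightarrow> real^'n"
  assumes Q: "orthogonal_transformation Q"
  shows "distr lborel borel Q = lborel"
proof (rule lborel_eqI[symmetric])
  fix l u :: "real^'n"
  assume le: "\<And>b. b \<in> Basis \<Longrightarrow> l \<bullet> b \<le> u \<bullet> b"
  define R where "R = Phi \<circ> Q \<circ> Psi"
  have lR: "linear R"
    unfolding R_def using Q linear_Phi linear_Psi
    by (intro linear_compose) (auto simp: orthogonal_transformation_def)
  have iR: "R v \<bullet> R w = v \<bullet> w" for v w
    using Q unfolding R_def orthogonal_transformation_def by (simp add: inner_Phi inner_Psi)
  have R: "orthogonal_transformation R"
    unfolding orthogonal_transformation_def using lR iR by blast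
  have Qm: "Q \<in> borel_measurable borel"
    using Q orthogonal_transformation_linear linear_conv_bounded_linear
    by (auto intro!: borel_measurable_continuous_onI linear_continuous_on)
  have Rm: "R \<in> borel_measurable borel"
    using R orthogonal_transformation_linear linear_conv_bounded_linear
    by (auto intro!: borel_measurable_continuous_onI linear_continuous_on)
  have PhiE: "emeasure lborel (Phi -` C) = emeasure lborel C" if "C \<in> sets borel" for C :: "(real^'n wo) set"
  proof -
    have "emeasure (distr lborel borel (Phi :: real^'n \<Rightarrow> _)) C = emeasure lborel (Phi -` C)"
      using that by (subst emeasure_distr) auto
    then show ?thesis using distr_Phi by metis
  qed
  let ?B = "box l u"
  have eqQ: "Q -` ?B = Phi -` (R -` (Psi -` ?B))"
    unfolding R_def by (simp add: vimage_def)
  have PsiB: "Psi -` ?B \<in> sets borel"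
    using measurable_sets_borel[OF Psi_meas, of ?B] by simp
  have PsiBb: "bounded (Psi -` ?B)"
  proof -
    have "Psi -` ?B = Phi ` ?B"
    proof (intro set_eqI iffI)
      fix x assume "x \<in> Psi -` ?B"
      then show "x \<in> Phi ` ?B" using Phi_Psi(1)[of x] by (metis imageI vimageE)
    next
      fix x assume "x \<in> Phi ` ?B"
      then show "x \<in> Psi -` ?B" by auto
    qed
    moreover have "bounded_linear (Phi :: real^'n \<Rightarrow> _)"
      using linear_Phi linear_conv_bounded_linear by blast
    ultimately show ?thesis
      using bounded_linear_image[OF bounded_box] by metis
  qed
  have RB: "R -` (Psi -` ?B) \<in> sets borel"
    using measurable_sets_borel[OF Rm PsiB] by simp
  have "emeasure lborel (Q -` ?B) = emeasure lborel (R -` (Psi -` ?B))"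
    unfolding eqQ using PhiE[OF RB] .
  also have "\<dots> = emeasure lborel (Psi -` ?B)"
    using orth_wo_emeasure[OF R PsiBb PsiB] .
  also have "\<dots> = emeasure lborel ?B"
    using PhiE[OF PsiB] by (simp add: vimage_def)
  finally show "emeasure (distr lborel borel Q) ?B = (\<Prod>b\<in>Basis. (u - l) \<bullet> b)"
    using le Qm by (simp add: emeasure_distr emeasure_lborel_box_eq)
qed simp

definition sproj :: "real^'n \<Rightarrow> real^'n" where
  "sproj x = (if x = 0 then (SOME y. y \<in> sphere (0::real^'n) 1) else sgn x)"

lemma some_sphere: "(SOME y. y \<in> sphere (0::real^'n) 1) \<in> sphere 0 1"
proof (rule someI_ex)
  obtain y :: "real^'n" where "norm y = 1" using vector_choose_size zero_le_one by blast
  then show "\<exists>y. y \<in> sphere (0::real^'n) 1" by auto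
qed

lemma sproj_sphere: "sproj x \<in> sphere 0 1"
  using some_sphere by (auto simp: sproj_def norm_sgn)

lemma sproj_borel: "sproj \<in> borel_measurable (borel :: (real^'n) measure)"
  unfolding sproj_def sgn_div_norm by measurable

lemma sproj_meas_U:
  "sproj \<in> uniform_measure lborel (ball (0::real^'n) 1) \<rightarrow>\<^sub>M restrict_space borel (sphere 0 1)"
proof -
  have "sproj \<in> space borel \<rightarrow> sphere (0::real^'n) 1" using sproj_sphere by blast
  from measurable_restrict_space2[OF this sproj_borel]
  have m: "sproj \<in> borel \<rightarrow>\<^sub>M restrict_space borel (sphere (0::real^'n) 1)" .
  have s: "sets (uniform_measure lborel (ball (0::real^'n) 1)) = sets borel" by simp
  show ?thesis using measurable_cong_sets[OF s refl] m by blast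
qed

lemma space_sm[simp]: "space (sphere_measure :: (real^'n) measure) = sphere 0 1"
  by (simp add: sphere_measure_def)

lemma sets_sm: "sets (sphere_measure :: (real^'n) measure) = sets (restrict_space borel (sphere 0 1))"
  by (simp add: sphere_measure_def)

lemma sproj_eq: "sphere_measure = distr (uniform_measure lborel (ball (0::real^'n) 1))
   (restrict_space borel (sphere 0 1)) sproj"
  unfolding sphere_measure_def sproj_def[abs_def] by (rule refl)

lemma vol_ball_pos: "emeasure lborel (ball (0::real^'n) 1) \<noteq> 0"
  and vol_ball_fin: "emeasure lborel (ball (0::real^'n) 1) \<noteq> \<infinity>"
proof -
  have c: "measure lborel (ball (0::real^'n) 1) > 0" by (rule content_ball_pos) simp
  have f: "emeasure lborel (ball (0::real^'n) 1) < \<infinity>" by (rule emeasure_lborel_ball_finite)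
  then have e: "emeasure lborel (ball (0::real^'n) 1) = ennreal (measure lborel (ball (0::real^'n) 1))"
    by (intro emeasure_eq_ennreal_measure) simp
  show "emeasure lborel (ball (0::real^'n) 1) \<noteq> 0" unfolding e using c by simp
  show "emeasure lborel (ball (0::real^'n) 1) \<noteq> \<infinity>" using f by simp
qed

lemma prob_space_sm: "prob_space (sphere_measure :: (real^'n) measure)"
proof -
  interpret U: prob_space "uniform_measure lborel (ball (0::real^'n) 1)"
    by (rule prob_space_uniform_measure) (use vol_ball_pos vol_ball_fin in auto)
  show ?thesis unfolding sproj_eq by (rule U.prob_space_distr[OF sproj_meas_U])
qed

lemma emeasure_sm:
  assumes "A \<in> sets (sphere_measure :: (real^'n) measure)"
  shows "emeasure (sphere_measure :: (real^'n) measure) A =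
    emeasure lborel (ball 0 1 \<inter> sproj -` A) / emeasure lborel (ball (0::real^'n) 1)"
proof -
  have A: "A \<in> sets (restrict_space borel (sphere (0::real^'n) 1))" using assms sets_sm by metis
  have m: "sproj -` A \<in> sets (borel :: (real^'n) measure)"
    using measurable_sets[OF sproj_meas_U A] by simp
  show ?thesis
    unfolding sproj_eq using A m
    by (subst emeasure_distr[OF sproj_meas_U A]) (simp add: emeasure_uniform_measure)
qed


lemma sgn_orth: "orthogonal_transformation Q \<Longrightarrow> sgn (Q z) = Q (sgn z)"
  by (simp add: sgn_div_norm orthogonal_transformation_norm orthogonal_transformation_scaleR)

lemma Q_sphere: "orthogonal_transformation Q \<Longrightarrow> x \<in> sphere 0 1 \<Longrightarrow> Q x \<in> sphere 0 1"
  by (simp add: orthogonal_transformation_norm)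

lemma orth_borel: "orthogonal_transformation (Q :: 'a::euclidean_space \<Rightarrow> 'a) \<Longrightarrow> Q \<in> borel_measurable borel"
  using orthogonal_transformation_linear linear_conv_bounded_linear
  by (auto intro!: borel_measurable_continuous_onI linear_continuous_on)

lemma Q_meas_sm:
  assumes Q: "orthogonal_transformation (Q :: real^'n \<Rightarrow> real^'n)"
  shows "Q \<in> (sphere_measure :: (real^'n) measure) \<rightarrow>\<^sub>M sphere_measure"
proof -
  have m1: "Q \<in> restrict_space borel (sphere (0::real^'n) 1) \<rightarrow>\<^sub>M borel"
    using measurable_restrict_space1[OF orth_borel[OF Q]] .
  have "Q \<in> space (restrict_space borel (sphere (0::real^'n) 1)) \<rightarrow> sphere 0 1"
    using Q_sphere[OF Q] by auto
  from measurable_restrict_space2[OF this m1]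
  have "Q \<in> restrict_space borel (sphere (0::real^'n) 1) \<rightarrow>\<^sub>M restrict_space borel (sphere 0 1)" .
  then show ?thesis using measurable_cong_sets[OF sets_sm sets_sm] by blast
qed

lemma sm_invariant:
  assumes Q: "orthogonal_transformation (Q :: real^'n \<Rightarrow> real^'n)"
  shows "distr sphere_measure sphere_measure Q = (sphere_measure :: (real^'n) measure)"
proof (rule measure_eqI)
  show "sets (distr sphere_measure sphere_measure Q) = sets (sphere_measure :: (real^'n) measure)"
    by simp
  fix A assume "A \<in> sets (distr sphere_measure sphere_measure Q)"
  then have A: "A \<in> sets (sphere_measure :: (real^'n) measure)" by simp
  have QA: "Q -` A \<inter> sphere 0 1 \<in> sets (sphere_measure :: (real^'n) measure)"
    using measurable_sets[OF Q_meas_sm[OF Q] A] by simp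
  have Ab: "A \<in> sets (restrict_space borel (sphere (0::real^'n) 1))" using A sets_sm by metis
  define E where "E = ball 0 1 \<inter> sproj -` A"
  define F where "F = ball 0 1 \<inter> sproj -` (Q -` A \<inter> sphere (0::real^'n) 1)"
  have Eb: "E \<in> sets borel"
    unfolding E_def using measurable_sets[OF sproj_meas_U Ab] by auto
  have QEb: "Q -` E \<in> sets borel"
    using measurable_sets_borel[OF orth_borel[OF Q] Eb] by simp
  have Fb: "F \<in> sets borel"
  proof -
    have "Q -` A \<inter> sphere 0 1 \<in> sets (restrict_space borel (sphere (0::real^'n) 1))"
      using QA sets_sm by metis
    from measurable_sets[OF sproj_meas_U this]
    have X: "sproj -` (Q -` A \<inter> sphere 0 1) \<in> sets (borel :: (real^'n) measure)" by simp
    have "ball 0 1 \<in> sets (borel :: (real^'n) measure)" by simp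
    then show ?thesis unfolding F_def using X by (rule sets.Int)
  qed
  have FE: "F - {0} = Q -` E - {0}"
  proof (intro set_eqI iffI)
    fix z assume z: "z \<in> F - {0}"
    then have "Q z \<noteq> 0" using orthogonal_transformation_norm[OF Q, of z] by auto
    then show "z \<in> Q -` E - {0}"
      using z Q by (auto simp: F_def E_def sproj_def sgn_orth orthogonal_transformation_norm)
  next
    fix z assume z: "z \<in> Q -` E - {0}"
    then have "Q z \<noteq> 0" using orthogonal_transformation_norm[OF Q, of z] by auto
    then show "z \<in> F - {0}"
      using z Q by (auto simp: F_def E_def sproj_def sgn_orth orthogonal_transformation_norm norm_sgn)
  qed
  have null0: "{0} \<in> null_sets (lborel :: (real^'n) measure)" by (rule finite_imp_null_set_lborel) simp
  have "emeasure lborel F = emeasure lborel (F - {0})"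
    using emeasure_Diff_null_set[OF null0, of F] Fb by simp
  also have "\<dots> = emeasure lborel (Q -` E - {0})" by (simp add: FE)
  also have "\<dots> = emeasure lborel (Q -` E)"
    using emeasure_Diff_null_set[OF null0, of "Q -` E"] QEb by simp
  also have "\<dots> = emeasure (distr lborel borel Q) E"
    using Eb orth_borel[OF Q] by (subst emeasure_distr) auto
  also have "\<dots> = emeasure lborel E" by (simp add: lborel_orth[OF Q])
  finally have FE2: "emeasure lborel F = emeasure lborel E" .
  show "emeasure (distr sphere_measure sphere_measure Q) A = emeasure (sphere_measure :: (real^'n) measure) A"
    using FE2 A QA
    by (simp add: emeasure_distr[OF Q_meas_sm[OF Q] A] emeasure_sm F_def E_def)
qed

lemma sm_integral_invariant:
  assumes Q: "orthogonal_transformation (Q :: real^'n \<Rightarrow> real^'n)"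
    and g: "(g :: real^'n \<Rightarrow> real) \<in> borel_measurable (sphere_measure :: (real^'n) measure)"
  shows "(\<integral>x. g (Q x) \<partial>sphere_measure) = (\<integral>x. g x \<partial>(sphere_measure :: (real^'n) measure))"
proof -
  have "(\<integral>x. g x \<partial>(sphere_measure :: (real^'n) measure)) = (\<integral>x. g x \<partial>distr sphere_measure sphere_measure Q)"
    by (simp add: sm_invariant[OF Q])
  also have "\<dots> = (\<integral>x. g (Q x) \<partial>sphere_measure)"
    by (rule integral_distr[OF Q_meas_sm[OF Q] g])
  finally show ?thesis by simp
qed

lemma emeasure_lborel_ball_pos: "r > 0 \<Longrightarrow> emeasure lborel (ball (c::'a::euclidean_space) r) \<noteq> 0"
proof -
  assume r: "r > 0"
  have c: "measure lborel (ball c r) > 0" by (rule content_ball_pos[OF r])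
  have f: "emeasure lborel (ball c r) < \<infinity>" by (rule emeasure_lborel_ball_finite)
  then have e: "emeasure lborel (ball c r) = ennreal (measure lborel (ball c r))"
    by (intro emeasure_eq_ennreal_measure) simp
  show ?thesis unfolding e using c by simp
qed

lemma sm_ball_pos:
  assumes x0: "x0 \<in> sphere (0::real^'n) 1" and r: "r > 0"
  shows "emeasure (sphere_measure :: (real^'n) measure) (ball x0 r \<inter> sphere 0 1) \<noteq> 0"
proof -
  define \<rho> where "\<rho> = min (r/4) (1/4)"
  define c where "c = (1/2) *\<^sub>R x0"
  have \<rho>: "\<rho> > 0" "\<rho> \<le> r/4" "\<rho> \<le> 1/4" using r by (auto simp: \<rho>_def)
  have nc: "norm c = 1/2" using x0 by (simp add: c_def)
  have sub: "ball c \<rho> \<subseteq> ball 0 1 \<inter> sproj -` (ball x0 r \<inter> sphere 0 1)"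
  proof
    fix z assume z: "z \<in> ball c \<rho>"
    then have dz: "norm (z - c) < \<rho>" by (simp add: dist_norm norm_minus_commute)
    have t1: "\<bar>norm z - norm c\<bar> \<le> norm (z - c)" by (rule norm_triangle_ineq3)
    have nz1: "norm z < 1" using t1 dz \<rho> nc by linarith
    have nz0: "norm z > 0" using t1 dz \<rho> nc by linarith
    then have z0: "z \<noteq> 0" by auto
    have eq: "sgn z - x0 = ((1 / norm z - 2) *\<^sub>R z) + (2 *\<^sub>R (z - c))"
      by (simp add: sgn_div_norm c_def algebra_simps inverse_eq_divide)
    have a1: "norm ((1 / norm z - 2) *\<^sub>R z) = \<bar>1 - 2 * norm z\<bar>"
    proof -
      have "norm ((1 / norm z - 2) *\<^sub>R z) = \<bar>1 / norm z - 2\<bar> * norm z" by simp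
      also have "\<dots> = \<bar>(1 / norm z - 2) * norm z\<bar>" using nz0 by (simp add: abs_mult)
      also have "(1 / norm z - 2) * norm z = 1 - 2 * norm z" using nz0 by (simp add: field_simps)
      finally show ?thesis .
    qed
    have a2: "\<bar>1 - 2 * norm z\<bar> \<le> 2 * norm (z - c)" using t1 nc by linarith
    have "norm (sgn z - x0) \<le> norm ((1 / norm z - 2) *\<^sub>R z) + norm (2 *\<^sub>R (z - c))"
      unfolding eq by (rule norm_triangle_ineq)
    also have "\<dots> \<le> 4 * norm (z - c)" using a1 a2 by simp
    also have "\<dots> < r" using dz \<rho> by linarith
    finally have "dist x0 (sgn z) < r" by (simp add: dist_norm norm_minus_commute)
    then show "z \<in> ball 0 1 \<inter> sproj -` (ball x0 r \<inter> sphere 0 1)"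
      using z0 nz1 by (simp add: sproj_def norm_sgn)
  qed
  have Bs: "ball x0 r \<inter> sphere 0 1 \<in> sets (sphere_measure :: (real^'n) measure)"
    unfolding sets_sm by (auto simp: sets_restrict_space_iff)
  have Bs': "ball x0 r \<inter> sphere 0 1 \<in> sets (restrict_space borel (sphere (0::real^'n) 1))"
    using Bs sets_sm by metis
  have mb: "ball 0 1 \<inter> sproj -` (ball x0 r \<inter> sphere (0::real^'n) 1) \<in> sets lborel"
    using measurable_sets[OF sproj_meas_U Bs'] by auto
  have "emeasure lborel (ball c \<rho>) \<le> emeasure lborel (ball 0 1 \<inter> sproj -` (ball x0 r \<inter> sphere 0 1))"
    by (rule emeasure_mono[OF sub mb])
  moreover have "emeasure lborel (ball c \<rho>) \<noteq> 0" by (rule emeasure_lborel_ball_pos[OF \<rho>(1)])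
  ultimately have num: "emeasure lborel (ball 0 1 \<inter> sproj -` (ball x0 r \<inter> sphere (0::real^'n) 1)) \<noteq> 0"
    by (metis le_zero_eq)
  have fin: "emeasure lborel (ball (0::real^'n) 1) \<noteq> top" using vol_ball_fin by simp
  show ?thesis
    unfolding emeasure_sm[OF Bs] using num fin by (simp only: ennreal_divide_eq_0_iff) simp
qed

lemma sm_continuous_ge:
  assumes u: "continuous_on (sphere 0 1) u"
    and ae: "AE x in (sphere_measure :: (real^'n) measure). u x \<ge> (0::real)"
    and x0: "x0 \<in> sphere (0::real^'n) 1"
  shows "u x0 \<ge> 0"
proof (rule ccontr)
  assume "\<not> u x0 \<ge> 0"
  then have neg: "u x0 < 0" by simp
  obtain r where r: "r > 0" and hr: "\<And>x'. x' \<in> sphere 0 1 \<Longrightarrow> dist x' x0 < r \<Longrightarrow> dist (u x') (u x0) < - u x0"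
    using u x0 neg unfolding continuous_on_iff by (metis neg_0_less_iff_less)
  from ae obtain N where N: "{x \<in> space sphere_measure. \<not> u x \<ge> 0} \<subseteq> N" "emeasure sphere_measure N = 0"
    "N \<in> sets (sphere_measure :: (real^'n) measure)"
    by (rule AE_E)
  have "ball x0 r \<inter> sphere 0 1 \<subseteq> N"
  proof
    fix x assume x: "x \<in> ball x0 r \<inter> sphere 0 1"
    have "dist x x0 < r" using x by (simp add: dist_commute)
    have "dist (u x) (u x0) < - u x0" by (rule hr) (use x \<open>dist x x0 < r\<close> in auto)
    then have "u x < 0" by (simp add: dist_real_def)
    then show "x \<in> N" using N(1) x by auto
  qed
  then have "emeasure sphere_measure (ball x0 r \<inter> sphere 0 1) \<le> emeasure (sphere_measure :: (real^'n) measure) N"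
    by (rule emeasure_mono[OF _ N(3)])
  then show False using N(2) sm_ball_pos[OF x0 r] by simp
qed


lemma hd_alt: "harm_dim d n = (n + d choose d) - (if n \<ge> 2 then (n - 2 + d choose d) else 0)"
proof -
  have e1: "(n + d choose n) = (n + d choose d)"
    using binomial_symmetric[of n "n + d"] by simp
  have e2: "(n - 2 + d choose (n - 2)) = (n - 2 + d choose d)"
    using binomial_symmetric[of "n - 2" "n - 2 + d"] by simp
  show ?thesis by (simp only: harm_dim_def e1 e2)
qed

lemma hd_sum: "(\<Sum>n<Suc (Suc M). harm_dim d n) = (Suc M + d choose d) + (M + d choose d)"
proof (induction M)
  case 0
  have "harm_dim d 0 = 1" by (simp add: hd_alt)
  moreover have "harm_dim d 1 = Suc d" by (simp add: hd_alt)
  ultimately show ?case by simp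
next
  case (Suc M)
  have mono: "(M + d choose d) \<le> (Suc (Suc M) + d choose d)"
    by (rule binomial_right_mono) simp
  have "harm_dim d (Suc (Suc M)) = (Suc (Suc M) + d choose d) - (M + d choose d)"
    by (simp add: hd_alt)
  then show ?case using Suc mono by simp
qed

lemma hd_sum_upper: "(\<Sum>n<M. harm_dim d n) \<le> 2 * (M + d) ^ d"
proof (cases M)
  case 0 then show ?thesis by simp
next
  case (Suc M1)
  show ?thesis
  proof (cases M1)
    case 0
    then show ?thesis using Suc by (simp add: hd_alt)
  next
    case (Suc M2)
    have "(\<Sum>n<M. harm_dim d n) = (Suc M2 + d choose d) + (M2 + d choose d)"
      using \<open>M = Suc M1\<close> Suc hd_sum by simp
    also have "\<dots> \<le> 2 * (Suc M2 + d choose d)"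
      using binomial_right_mono[of "M2 + d" "Suc M2 + d" d] by simp
    also have "(Suc M2 + d choose d) \<le> (Suc M2 + d) ^ d"
      by (rule binomial_le_pow) simp
    also have "(Suc M2 + d) ^ d \<le> (M + d) ^ d"
      using \<open>M = Suc M1\<close> Suc by (intro power_mono) auto
    finally show ?thesis by simp
  qed
qed

lemma hd_sum_lower:
  assumes d: "d \<ge> 1"
  shows "(real M / real d) ^ d \<le> real (\<Sum>n<Suc M. harm_dim d n)"
proof (cases M)
  case 0 then show ?thesis using d by (simp add: power_0_left)
next
  case (Suc M1)
  have "(real M / real d) ^ d \<le> (real (M + d) / real d) ^ d"
    using d by (intro power_mono divide_right_mono) auto
  also have "\<dots> \<le> real (M + d choose d)"
    by (rule binomial_ge_n_over_k_pow_k) simp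
  also have "(M + d choose d) \<le> (\<Sum>n<Suc M. harm_dim d n)"
    using hd_sum[of d M1] Suc by simp
  finally show ?thesis by simp
qed

lemma hd_le:
  assumes d: "d \<ge> 1"
  shows "harm_dim d n \<le> 2 * (n + d) ^ (d - 1)"
proof -
  obtain e where e: "d = Suc e" using d by (cases d) auto
  show ?thesis
  proof (cases "n \<ge> 2")
    case True
    then obtain m where m: "n = Suc (Suc m)" by (metis add_2_eq_Suc le_Suc_ex)
    have p1: "(n + d choose d) = (Suc m + e + 1 choose e) + (Suc m + e + 1 choose Suc e)"
      using binomial_Suc_Suc[of "Suc m + e + 1" e] by (simp add: m e)
    have p2: "(Suc m + e + 1 choose Suc e) = (m + e + 1 choose e) + (m + e + 1 choose Suc e)"
      using binomial_Suc_Suc[of "m + e + 1" e] by simp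
    have p3: "(n - 2 + d choose d) = (m + e + 1 choose Suc e)" by (simp add: m e)
    have h: "harm_dim d n = (n + d choose d) - (n - 2 + d choose d)"
      using True by (simp only: hd_alt if_True)
    also have "\<dots> = ((Suc m + e + 1 choose e) + ((m + e + 1 choose e) + (m + e + 1 choose Suc e)))
        - (m + e + 1 choose Suc e)" by (simp only: p1 p2 p3)
    also have "\<dots> = (Suc m + e + 1 choose e) + (m + e + 1 choose e)" by simp
    finally have "harm_dim d n = (Suc m + e + 1 choose e) + (m + e + 1 choose e)" .
    also have "\<dots> \<le> (Suc m + e + 1) ^ e + (Suc m + e + 1) ^ e"
    proof (rule add_mono)
      show "(Suc m + e + 1 choose e) \<le> (Suc m + e + 1) ^ e" by (rule binomial_le_pow) simp
      have "(m + e + 1 choose e) \<le> (m + e + 1) ^ e" by (rule binomial_le_pow) simp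
      also have "\<dots> \<le> (Suc m + e + 1) ^ e" by (intro power_mono) auto
      finally show "(m + e + 1 choose e) \<le> (Suc m + e + 1) ^ e" .
    qed
    also have "(Suc m + e + 1) = n + d - 1" by (simp add: m e)
    finally have "harm_dim d n \<le> 2 * (n + d - 1) ^ (d - 1)" by (simp add: e)
    also have "\<dots> \<le> 2 * (n + d) ^ (d - 1)" by (intro mult_left_mono power_mono) auto
    finally show ?thesis .
  next
    case False
    then have "n = 0 \<or> n = 1" by auto
    then show ?thesis
    proof
      assume "n = 0"
      then show ?thesis using d by (simp add: hd_alt)
    next
      assume n1: "n = 1"
      have "harm_dim d n = Suc d" using n1 by (simp add: hd_alt)
      also have "\<dots> \<le> 2 * (1 + d) ^ (d - 1)"
      proof (cases e)
        case 0 then show ?thesis using e by simp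
      next
        case (Suc e1)
        have "Suc d \<le> (1 + d) ^ 1" by simp
        also have "\<dots> \<le> (1 + d) ^ (d - 1)" by (rule power_increasing) (use e Suc in auto)
        finally show ?thesis by simp
      qed
      finally show ?thesis using n1 by simp
    qed
  qed
qed


definition sqi :: "'a measure \<Rightarrow> ('a \<Rightarrow> real) \<Rightarrow> bool" where
  "sqi M g \<longleftrightarrow> g \<in> borel_measurable M \<and> integrable M (\<lambda>x. (g x)\<^sup>2)"

lemma sqi_meas: "sqi M g \<Longrightarrow> g \<in> borel_measurable M" by (simp add: sqi_def)
lemma sqi_int: "sqi M g \<Longrightarrow> integrable M (\<lambda>x. (g x)\<^sup>2)" by (simp add: sqi_def)

lemma abs_mult_le_sq: "\<bar>(a::real) * b\<bar> \<le> (a\<^sup>2 + b\<^sup>2) / 2"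
proof -
  have "0 \<le> (\<bar>a\<bar> - \<bar>b\<bar>)\<^sup>2" by simp
  then show ?thesis by (simp add: power2_eq_square abs_mult algebra_simps)
qed

lemma sqi_mult_int:
  assumes "sqi M g" "sqi M h"
  shows "integrable M (\<lambda>x. g x * h x)"
proof (rule Bochner_Integration.integrable_bound)
  show "integrable M (\<lambda>x. ((g x)\<^sup>2 + (h x)\<^sup>2) / 2)"
    using assms by (auto simp: sqi_def)
  show "(\<lambda>x. g x * h x) \<in> borel_measurable M" using assms by (auto simp: sqi_def)
  show "AE x in M. norm (g x * h x) \<le> norm (((g x)\<^sup>2 + (h x)\<^sup>2) / 2)"
    using abs_mult_le_sq by (auto simp: abs_le_iff)
qed

lemma sqi_int1:
  assumes "finite_measure M" "sqi M g"
  shows "integrable M g"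
proof (rule Bochner_Integration.integrable_bound)
  interpret finite_measure M by fact
  show "integrable M (\<lambda>x. (1 + (g x)\<^sup>2) / 2)"
    using assms by (auto simp: sqi_def)
  show "g \<in> borel_measurable M" using assms by (auto simp: sqi_def)
  show "AE x in M. norm (g x) \<le> norm ((1 + (g x)\<^sup>2) / 2)"
    using abs_mult_le_sq[of 1] by (auto simp: abs_le_iff)
qed

lemma sqi_add: "sqi M g \<Longrightarrow> sqi M h \<Longrightarrow> sqi M (\<lambda>x. g x + h x)"
proof -
  assume g: "sqi M g" and h: "sqi M h"
  have "integrable M (\<lambda>x. (g x)\<^sup>2 + (h x)\<^sup>2 + 2 * (g x * h x))"
    using g h sqi_mult_int[OF g h] by (auto simp: sqi_def)
  moreover have "(\<lambda>x. g x + h x) \<in> borel_measurable M"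
    using g h by (auto simp: sqi_def)
  ultimately show ?thesis by (simp add: sqi_def power2_sum mult.assoc)
qed

lemma sqi_cmult: "sqi M g \<Longrightarrow> sqi M (\<lambda>x. c * g x)"
  by (auto simp: sqi_def power_mult_distrib)

lemma sqi_sum: "finite I \<Longrightarrow> (\<And>i. i \<in> I \<Longrightarrow> sqi M (g i)) \<Longrightarrow> sqi M (\<lambda>x. \<Sum>i\<in>I. g i x)"
proof (induction I rule: finite_induct)
  case empty then show ?case by (simp add: sqi_def)
next
  case (insert a I)
  then show ?case by (simp add: sqi_add)
qed

lemma sqi_diff: "sqi M g \<Longrightarrow> sqi M h \<Longrightarrow> sqi M (\<lambda>x. g x - h x)"
  using sqi_add[of M g "\<lambda>x. (-1) * h x"] sqi_cmult[of M h "-1"] by simp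

lemma integral_expand_AE:
  assumes K: "finite K" and ae: "AE x in M. h x = (\<Sum>j\<in>K. c j * w j x)"
    and hm: "h \<in> borel_measurable M"
    and h': "sqi M h'" and w: "\<And>j. j \<in> K \<Longrightarrow> sqi M (w j)"
  shows "(\<integral>x. h' x * h x \<partial>M) = (\<Sum>j\<in>K. c j * (\<integral>x. h' x * w j x \<partial>M))"
proof -
  have "(\<integral>x. h' x * h x \<partial>M) = (\<integral>x. (\<Sum>j\<in>K. c j * (h' x * w j x)) \<partial>M)"
  proof (rule integral_cong_AE)
    show "(\<lambda>x. h' x * h x) \<in> borel_measurable M"
      using borel_measurable_times[OF sqi_meas[OF h'] hm] .
    have "(\<lambda>x. c j * (h' x * w j x)) \<in> borel_measurable M" if "j \<in> K" for j
      using sqi_meas[OF h'] sqi_meas[OF w[OF that]] by measurable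
    then show "(\<lambda>x. \<Sum>j\<in>K. c j * (h' x * w j x)) \<in> borel_measurable M"
      by (rule borel_measurable_sum)
    show "AE x in M. h' x * h x = (\<Sum>j\<in>K. c j * (h' x * w j x))"
      using ae by eventually_elim (simp add: sum_distrib_left algebra_simps)
  qed
  also have "\<dots> = (\<Sum>j\<in>K. c j * (\<integral>x. h' x * w j x \<partial>M))"
    using h' w by (simp add: integral_sum sqi_mult_int)
  finally show ?thesis .
qed

lemma bessel:
  assumes I: "finite I"
    and e: "\<And>i. i \<in> I \<Longrightarrow> sqi M (e i)"
    and on: "\<And>i i'. i \<in> I \<Longrightarrow> i' \<in> I \<Longrightarrow> (\<integral>x. e i x * e i' x \<partial>M) = (if i = i' then 1 else 0)"
    and g: "sqi M g"
  shows "(\<Sum>i\<in>I. (\<integral>x. g x * e i x \<partial>M)\<^sup>2) \<le> (\<integral>x. (g x)\<^sup>2 \<partial>M)"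
proof -
  define c where "c i = (\<integral>x. g x * e i x \<partial>M)" for i
  define s where "s x = (\<Sum>i\<in>I. c i * e i x)" for x
  have s: "sqi M s" unfolding s_def using I e by (intro sqi_sum sqi_cmult) auto
  have gs: "(\<integral>x. g x * s x \<partial>M) = (\<Sum>i\<in>I. (c i)\<^sup>2)"
  proof -
    have "(\<integral>x. g x * s x \<partial>M) = (\<Sum>i\<in>I. c i * (\<integral>x. g x * e i x \<partial>M))"
      by (rule integral_expand_AE[OF I _ _ g e]) (auto simp: s_def sqi_meas[OF s[unfolded s_def]])
    then show ?thesis by (simp add: c_def power2_eq_square)
  qed
  have ss: "(\<integral>x. s x * s x \<partial>M) = (\<Sum>i\<in>I. (c i)\<^sup>2)"
  proof -
    have "(\<integral>x. s x * s x \<partial>M) = (\<Sum>i\<in>I. c i * (\<integral>x. s x * e i x \<partial>M))"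
      by (rule integral_expand_AE[OF I _ _ s e]) (auto simp: s_def sqi_meas[OF s[unfolded s_def]])
    also have "\<dots> = (\<Sum>i\<in>I. c i * c i)"
    proof (rule sum.cong[OF refl])
      fix i assume i: "i \<in> I"
      have "(\<integral>x. e i x * s x \<partial>M) = (\<Sum>i'\<in>I. c i' * (\<integral>x. e i x * e i' x \<partial>M))"
        by (rule integral_expand_AE[OF I _ _ e[OF i] e]) (auto simp: s_def sqi_meas[OF s[unfolded s_def]])
      also have "\<dots> = c i" using i I by (simp add: on if_distrib cong: if_cong)
      finally show "c i * (\<integral>x. s x * e i x \<partial>M) = c i * c i" by (simp add: mult.commute)
    qed
    finally show ?thesis by (simp add: power2_eq_square)
  qed
  have "0 \<le> (\<integral>x. (g x - s x)\<^sup>2 \<partial>M)" by simp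
  also have "(\<integral>x. (g x - s x)\<^sup>2 \<partial>M) = (\<integral>x. (g x)\<^sup>2 - 2 * (g x * s x) + s x * s x \<partial>M)"
    by (rule Bochner_Integration.integral_cong) (simp_all add: power2_eq_square algebra_simps)
  also have "\<dots> = (\<integral>x. (g x)\<^sup>2 \<partial>M) - 2 * (\<integral>x. g x * s x \<partial>M) + (\<integral>x. s x * s x \<partial>M)"
    using g s sqi_mult_int[OF g s] sqi_mult_int[OF s s] by (simp add: sqi_def)
  finally show ?thesis using gs ss unfolding c_def by simp
qed

lemma count_le:
  assumes I: "finite I" and K: "finite K"
    and w: "\<And>j. j \<in> K \<Longrightarrow> sqi M (w j)"
    and won: "\<And>j j'. j \<in> K \<Longrightarrow> j' \<in> K \<Longrightarrow> (\<integral>x. w j x * w j' x \<partial>M) = (if j = j' then 1 else 0)"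
    and u: "\<And>i. i \<in> I \<Longrightarrow> sqi M (u i)"
    and u1: "\<And>i. i \<in> I \<Longrightarrow> (\<integral>x. (u i x)\<^sup>2 \<partial>M) = 1"
    and full: "\<And>j. j \<in> K \<Longrightarrow> (\<Sum>i\<in>I. (\<integral>x. w j x * u i x \<partial>M)\<^sup>2) = 1"
  shows "card K \<le> card I"
proof -
  have "real (card K) = (\<Sum>j\<in>K. \<Sum>i\<in>I. (\<integral>x. w j x * u i x \<partial>M)\<^sup>2)"
    using full by simp
  also have "\<dots> = (\<Sum>i\<in>I. \<Sum>j\<in>K. (\<integral>x. u i x * w j x \<partial>M)\<^sup>2)"
    by (subst sum.swap) (simp add: mult.commute)
  also have "\<dots> \<le> (\<Sum>i\<in>I. (\<integral>x. (u i x)\<^sup>2 \<partial>M))"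
    by (intro sum_mono bessel[OF K w won u]) auto
  also have "\<dots> = real (card I)" using u1 by simp
  finally show ?thesis by simp
qed

lemma bessel_finite:
  assumes I: "finite I" and K: "finite K"
    and on: "\<And>i i'. i \<in> I \<Longrightarrow> i' \<in> I \<Longrightarrow> (\<Sum>j\<in>K. r i j * r i' j) = (if i = i' then 1 else (0::real))"
  shows "(\<Sum>i\<in>I. (\<Sum>j\<in>K. y j * r i j)\<^sup>2) \<le> (\<Sum>j\<in>K. (y j)\<^sup>2)"
proof -
  have sq: "sqi (count_space K) g" for g :: "_ \<Rightarrow> real"
    unfolding sqi_def using K by (auto intro: integrable_count_space)
  have "(\<Sum>i\<in>I. (\<integral>j. y j * r i j \<partial>count_space K)\<^sup>2) \<le> (\<integral>j. (y j)\<^sup>2 \<partial>count_space K)"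
    by (rule bessel[OF I sq _ sq]) (use K on in \<open>simp add: lebesgue_integral_count_space_finite\<close>)
  then show ?thesis using K by (simp add: lebesgue_integral_count_space_finite)
qed


locale sph =
  fixes f :: "real \<Rightarrow> real" and \<mu> :: "nat \<Rightarrow> real" and Y :: "nat \<Rightarrow> nat \<Rightarrow> real^'n \<Rightarrow> real"
    and \<beta> :: real and d :: nat
  assumes d_def: "d = CARD('n) - 1"
    and dim: "CARD('n) \<ge> 2"
    and harm: "\<And>n l. l < harm_dim d n \<Longrightarrow> Y n l \<in> sph_harm_space n"
    and orth: "\<And>n l n' l'. l < harm_dim d n \<Longrightarrow> l' < harm_dim d n' \<Longrightarrow>
                 (\<integral>x. Y n l x * Y n' l' x \<partial>(sphere_measure :: (real^'n) measure)) = (if n = n' \<and> l = l' then 1 else 0)"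
    and complete: "\<And>g. g \<in> borel_measurable (sphere_measure :: (real^'n) measure) \<Longrightarrow>
                 integrable (sphere_measure :: (real^'n) measure) (\<lambda>x. (g x)\<^sup>2) \<Longrightarrow>
                 (\<forall>n l. l < harm_dim d n \<longrightarrow> (\<integral>x. g x * Y n l x \<partial>(sphere_measure :: (real^'n) measure)) = 0) \<Longrightarrow>
                 AE x in (sphere_measure :: (real^'n) measure). g x = 0"
    and mercer: "\<And>x y. x \<in> sphere 0 1 \<Longrightarrow> y \<in> sphere 0 1 \<Longrightarrow>
                 (\<lambda>n. \<mu> n * (\<Sum>l<harm_dim d n. Y n l x * Y n l y)) sums f (x \<bullet> y)"
    and mu0: "\<mu> 0 \<ge> 0"
    and beta: "\<beta> > 1"
    and decay: "\<exists>c C. c > 0 \<and> C > 0 \<and> (\<forall>n\<ge>1.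
                 c * real n powr (- (real d * \<beta>)) \<le> \<mu> n \<and>
                 \<mu> n \<le> C * real n powr (- (real d * \<beta>)))"
begin

abbreviation sig :: "(real^'n) measure" where "sig \<equiv> sphere_measure"
abbreviation SS :: "(real^'n) set" where "SS \<equiv> sphere 0 1"
abbreviation a :: "nat \<Rightarrow> nat" where "a n \<equiv> harm_dim d n"

lemma d1: "d \<ge> 1" using dim d_def by simp

definition cC :: "real \<times> real" where
  "cC = (SOME p. fst p > 0 \<and> snd p > 0 \<and> (\<forall>n\<ge>1. fst p * real n powr (- (real d * \<beta>)) \<le> \<mu> n \<and>
                 \<mu> n \<le> snd p * real n powr (- (real d * \<beta>))))"

lemma cC: "fst cC > 0" "snd cC > 0"
  "\<And>n. n \<ge> 1 \<Longrightarrow> fst cC * real n powr (- (real d * \<beta>)) \<le> \<mu> n"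
  "\<And>n. n \<ge> 1 \<Longrightarrow> \<mu> n \<le> snd cC * real n powr (- (real d * \<beta>))"
proof -
  have "\<exists>p. fst p > 0 \<and> snd p > 0 \<and> (\<forall>n\<ge>1. fst p * real n powr (- (real d * \<beta>)) \<le> \<mu> n \<and>
                 \<mu> n \<le> snd p * real n powr (- (real d * \<beta>)))"
    using decay by auto
  from someI_ex[OF this] show "fst cC > 0" "snd cC > 0"
    "\<And>n. n \<ge> 1 \<Longrightarrow> fst cC * real n powr (- (real d * \<beta>)) \<le> \<mu> n"
    "\<And>n. n \<ge> 1 \<Longrightarrow> \<mu> n \<le> snd cC * real n powr (- (real d * \<beta>))"
    unfolding cC_def by auto
qed

lemma mu_pos: "n \<ge> 1 \<Longrightarrow> \<mu> n > 0"
proof -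
  assume n: "n \<ge> 1"
  have "0 < fst cC * real n powr (- (real d * \<beta>))" using cC(1) n by simp
  then show ?thesis using cC(3)[OF n] by linarith
qed

lemma mu_ge0: "\<mu> n \<ge> 0"
  using mu_pos[of n] mu0 by (cases n) auto

lemma prob: "prob_space sig" by (rule prob_space_sm)

lemma fin: "finite_measure sig"
  using prob prob_space_def by blast

lemma Y_cont: "l < a n \<Longrightarrow> continuous_on SS (Y n l)"
proof -
  assume l: "l < a n"
  from harm[OF l] obtain p where p: "hom_poly n p" "\<forall>x\<in>SS. Y n l x = p x"
    unfolding sph_harm_space_def by auto
  from p(1) obtain c :: "('n \<Rightarrow> nat) \<Rightarrow> real" where
    c: "\<And>x. p x = (\<Sum>\<alpha>\<in>{\<alpha>. sum \<alpha> UNIV = n}. c \<alpha> * (\<Prod>i\<in>UNIV. (x $ i) ^ (\<alpha> i)))"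
    unfolding hom_poly_def by blast
  have "continuous_on SS (\<lambda>x. (\<Sum>\<alpha>\<in>{\<alpha>. sum \<alpha> UNIV = n}. c \<alpha> * (\<Prod>i\<in>UNIV. (x $ i) ^ (\<alpha> i))))"
    by (intro continuous_intros)
  then have "continuous_on SS p" using c by simp
  then show ?thesis using p(2) continuous_on_eq by (metis (no_types, lifting))
qed

lemma Y_meas: "l < a n \<Longrightarrow> Y n l \<in> borel_measurable sig"
proof -
  assume l: "l < a n"
  have "Y n l \<in> borel_measurable (restrict_space borel SS)"
    by (rule borel_measurable_continuous_on_restrict[OF Y_cont[OF l]])
  then show ?thesis using measurable_cong_sets[OF sets_sm refl] by blast
qed

lemma Y_bdd: "l < a n \<Longrightarrow> \<exists>B. \<forall>x\<in>SS. \<bar>Y n l x\<bar> \<le> B"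
proof -
  assume l: "l < a n"
  have "compact (Y n l ` SS)" by (rule compact_continuous_image[OF Y_cont[OF l]]) simp
  then have "bounded (Y n l ` SS)" by (rule compact_imp_bounded)
  then show ?thesis unfolding bounded_iff by auto
qed

lemma Y_sqi: "l < a n \<Longrightarrow> sqi sig (Y n l)"
proof -
  assume l: "l < a n"
  obtain B where B: "\<forall>x\<in>SS. \<bar>Y n l x\<bar> \<le> B" using Y_bdd[OF l] by blast
  interpret finite_measure sig by (rule fin)
  have "integrable sig (\<lambda>x. (Y n l x)\<^sup>2)"
  proof (rule integrable_const_bound[where B="B\<^sup>2"])
    show "AE x in sig. norm ((Y n l x)\<^sup>2) \<le> B\<^sup>2"
    proof (rule AE_I2)
      fix x assume "x \<in> space sig"
      then have "\<bar>Y n l x\<bar> \<le> B" using B by simp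
      then have "\<bar>Y n l x\<bar>\<^sup>2 \<le> B\<^sup>2" by (intro power_mono) auto
      then show "norm ((Y n l x)\<^sup>2) \<le> B\<^sup>2" by simp
    qed
    show "(\<lambda>x. (Y n l x)\<^sup>2) \<in> borel_measurable sig" using Y_meas[OF l] by measurable
  qed
  then show ?thesis using Y_meas[OF l] by (simp add: sqi_def)
qed

lemma Y_int_mult: "l < a n \<Longrightarrow> integrable sig g \<Longrightarrow> g \<in> borel_measurable sig \<Longrightarrow>
    integrable sig (\<lambda>y. Y n l y * g y)"
proof -
  assume l: "l < a n" and g: "integrable sig g" "g \<in> borel_measurable sig"
  obtain B where B: "\<forall>x\<in>SS. \<bar>Y n l x\<bar> \<le> B" using Y_bdd[OF l] by blast
  show ?thesis
  proof (rule Bochner_Integration.integrable_bound)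
    show "integrable sig (\<lambda>y. B * g y)" using g by simp
    show "(\<lambda>y. Y n l y * g y) \<in> borel_measurable sig" using Y_meas[OF l] g by measurable
    show "AE x in sig. norm (Y n l x * g x) \<le> norm (B * g x)"
    proof (rule AE_I2)
      fix x assume "x \<in> space sig"
      then have "\<bar>Y n l x\<bar> \<le> B" using B by simp
      then show "norm (Y n l x * g x) \<le> norm (B * g x)"
        by (simp add: abs_mult mult_right_mono)
    qed
  qed
qed

definition Pk :: "nat \<Rightarrow> real^'n \<Rightarrow> real^'n \<Rightarrow> real" where
  "Pk N x y = (\<Sum>n<N. \<mu> n * (\<Sum>l<a n. Y n l x * Y n l y))"

lemma Pk_tendsto: "x \<in> SS \<Longrightarrow> y \<in> SS \<Longrightarrow> (\<lambda>N. Pk N x y) \<longlonglongrightarrow> f (x \<bullet> y)"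
  using mercer unfolding sums_def Pk_def by blast

lemma inner_sphere: "x \<in> SS \<Longrightarrow> x \<bullet> x = 1"
  by (simp add: power2_norm_eq_inner[symmetric])

lemma Pk_diag: "x \<in> SS \<Longrightarrow> 0 \<le> Pk N x x \<and> Pk N x x \<le> f 1"
proof -
  assume x: "x \<in> SS"
  have s: "(\<lambda>n. \<mu> n * (\<Sum>l<a n. Y n l x * Y n l x)) sums f 1"
    using mercer[OF x x] inner_sphere[OF x] by simp
  have nn: "0 \<le> \<mu> n * (\<Sum>l<a n. Y n l x * Y n l x)" for n
    using mu_ge0 by (simp add: sum_nonneg)
  have "Pk N x x \<le> f 1"
    unfolding Pk_def using sum_le_suminf[OF sums_summable[OF s], of "{..<N}"] nn sums_unique[OF s]
    by simp
  moreover have "0 \<le> Pk N x x" unfolding Pk_def using nn by (simp add: sum_nonneg)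
  ultimately show ?thesis by simp
qed

lemma f1_nonneg: "f 1 \<ge> 0"
proof -
  obtain x :: "real^'n" where "norm x = 1" using vector_choose_size zero_le_one by blast
  then have "x \<in> SS" by simp
  then show ?thesis using Pk_diag[of x 0] by simp
qed

lemma Pk_bound: "x \<in> SS \<Longrightarrow> y \<in> SS \<Longrightarrow> \<bar>Pk N x y\<bar> \<le> f 1"
proof -
  assume x: "x \<in> SS" and y: "y \<in> SS"
  have "\<bar>Pk N x y\<bar> \<le> (\<Sum>n<N. \<bar>\<mu> n * (\<Sum>l<a n. Y n l x * Y n l y)\<bar>)"
    unfolding Pk_def by (rule sum_abs)
  also have "\<dots> \<le> (\<Sum>n<N. \<mu> n * (\<Sum>l<a n. ((Y n l x)\<^sup>2 + (Y n l y)\<^sup>2) / 2))"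
  proof (rule sum_mono)
    fix n
    have "\<bar>\<mu> n * (\<Sum>l<a n. Y n l x * Y n l y)\<bar> = \<mu> n * \<bar>\<Sum>l<a n. Y n l x * Y n l y\<bar>"
      using mu_ge0 by (simp add: abs_mult)
    also have "\<dots> \<le> \<mu> n * (\<Sum>l<a n. ((Y n l x)\<^sup>2 + (Y n l y)\<^sup>2) / 2)"
      using mu_ge0 order_trans[OF sum_abs sum_mono[OF abs_mult_le_sq]]
      by (intro mult_left_mono) auto
    finally show "\<bar>\<mu> n * (\<Sum>l<a n. Y n l x * Y n l y)\<bar> \<le> \<mu> n * (\<Sum>l<a n. ((Y n l x)\<^sup>2 + (Y n l y)\<^sup>2) / 2)" .
  qed
  also have "\<dots> = (Pk N x x + Pk N y y) / 2"
    unfolding Pk_def by (simp add: sum_divide_distrib[symmetric] sum.distrib power2_eq_square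
        distrib_left add_divide_distrib)
  also have "\<dots> \<le> f 1" using Pk_diag[OF x, of N] Pk_diag[OF y, of N] by simp
  finally show ?thesis .
qed

lemma k_bound: "x \<in> SS \<Longrightarrow> y \<in> SS \<Longrightarrow> \<bar>f (x \<bullet> y)\<bar> \<le> f 1"
proof -
  assume x: "x \<in> SS" and y: "y \<in> SS"
  have "(\<lambda>N. \<bar>Pk N x y\<bar>) \<longlonglongrightarrow> \<bar>f (x \<bullet> y)\<bar>" by (intro tendsto_intros Pk_tendsto x y)
  then show ?thesis using Pk_bound[OF x y] by (intro LIMSEQ_le_const2) auto
qed

lemma Pk_meas: "x \<in> SS \<Longrightarrow> (\<lambda>y. Pk N x y) \<in> borel_measurable sig"
  unfolding Pk_def using Y_meas by (auto intro!: borel_measurable_sum borel_measurable_times)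

lemma k_meas: "x \<in> SS \<Longrightarrow> (\<lambda>y. f (x \<bullet> y)) \<in> borel_measurable sig"
proof -
  assume x: "x \<in> SS"
  show ?thesis
    by (rule borel_measurable_LIMSEQ_real[where u="\<lambda>N y. Pk N x y"])
       (use Pk_tendsto[OF x] Pk_meas[OF x] in auto)
qed

end


lemma integral_double_sum:
  fixes h :: "'i \<Rightarrow> 'j \<Rightarrow> 'a \<Rightarrow> real"
  assumes "\<And>n l. n \<in> A \<Longrightarrow> l \<in> B n \<Longrightarrow> integrable M (h n l)"
  shows "(\<integral>x. (\<Sum>n\<in>A. \<Sum>l\<in>B n. h n l x) \<partial>M) = (\<Sum>n\<in>A. \<Sum>l\<in>B n. \<integral>x. h n l x \<partial>M)"
proof -
  have i: "integrable M (\<lambda>x. \<Sum>l\<in>B n. h n l x)" if "n \<in> A" for n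
    by (rule Bochner_Integration.integrable_sum) (use assms that in auto)
  have "(\<integral>x. (\<Sum>n\<in>A. \<Sum>l\<in>B n. h n l x) \<partial>M) = (\<Sum>n\<in>A. \<integral>x. (\<Sum>l\<in>B n. h n l x) \<partial>M)"
    using Bochner_Integration.integral_sum[where I=A and M=M and f="\<lambda>n x. \<Sum>l\<in>B n. h n l x", OF i] by simp
  also have "\<dots> = (\<Sum>n\<in>A. \<Sum>l\<in>B n. \<integral>x. h n l x \<partial>M)"
  proof (rule sum.cong[OF refl])
    fix n assume n: "n \<in> A"
    show "(\<integral>x. (\<Sum>l\<in>B n. h n l x) \<partial>M) = (\<Sum>l\<in>B n. \<integral>x. h n l x \<partial>M)"
      using Bochner_Integration.integral_sum[where I="B n" and M=M and f="h n"] assms n by simp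
  qed
  finally show ?thesis .
qed

context sph
begin

definition Tk :: "(real^'n \<Rightarrow> real) \<Rightarrow> real^'n \<Rightarrow> real" where
  "Tk g x = (\<integral>y. f (x \<bullet> y) * g y \<partial>sig)"

definition cf :: "(real^'n \<Rightarrow> real) \<Rightarrow> nat \<Rightarrow> nat \<Rightarrow> real" where
  "cf g n l = (\<integral>y. Y n l y * g y \<partial>sig)"

definition Qs :: "(real^'n \<Rightarrow> real) \<Rightarrow> nat \<Rightarrow> real^'n \<Rightarrow> real" where
  "Qs g N x = (\<Sum>n<N. \<mu> n * (\<Sum>l<a n. Y n l x * cf g n l))"

lemma Qs_meas: "Qs g N \<in> borel_measurable sig"
  unfolding Qs_def using Y_meas by (auto intro!: borel_measurable_sum borel_measurable_times)

lemma int_Pk: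
  assumes x: "x \<in> SS" and g: "integrable sig g" "g \<in> borel_measurable sig"
  shows "(\<integral>y. Pk N x y * g y \<partial>sig) = Qs g N x"
proof -
  have eq: "(\<lambda>y. Pk N x y * g y) = (\<lambda>y. \<Sum>n<N. \<Sum>l<a n. (\<mu> n * Y n l x) * (Y n l y * g y))"
    by (auto simp: Pk_def sum_distrib_left sum_distrib_right algebra_simps)
  have int: "integrable sig (\<lambda>y. (\<mu> n * Y n l x) * (Y n l y * g y))" if "l < a n" for n l
    using Y_int_mult[OF that g] by simp
  have "(\<integral>y. Pk N x y * g y \<partial>sig) = (\<Sum>n<N. \<Sum>l<a n. (\<mu> n * Y n l x) * cf g n l)"
    unfolding eq cf_def
    by (subst integral_double_sum) (use int in \<open>simp_all add: integral_mult_right_zero\<close>)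
  also have "\<dots> = Qs g N x" unfolding Qs_def by (simp add: sum_distrib_left mult.assoc)
  finally show ?thesis .
qed

lemma Qs_bound:
  assumes x: "x \<in> SS" and g: "integrable sig g" "g \<in> borel_measurable sig"
  shows "\<bar>Qs g N x\<bar> \<le> f 1 * (\<integral>y. \<bar>g y\<bar> \<partial>sig)"
proof -
  have i1: "integrable sig (\<lambda>y. Pk N x y * g y)"
  proof (rule Bochner_Integration.integrable_bound)
    show "integrable sig (\<lambda>y. f 1 * \<bar>g y\<bar>)" using g by simp
    show "(\<lambda>y. Pk N x y * g y) \<in> borel_measurable sig" using Pk_meas[OF x] g by measurable
    show "AE y in sig. norm (Pk N x y * g y) \<le> norm (f 1 * \<bar>g y\<bar>)"
      using Pk_bound[OF x] f1_nonneg by (intro AE_I2) (auto simp: abs_mult intro!: mult_right_mono)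
  qed
  have "\<bar>Qs g N x\<bar> = \<bar>\<integral>y. Pk N x y * g y \<partial>sig\<bar>" using int_Pk[OF x g] by simp
  also have "\<dots> \<le> (\<integral>y. f 1 * \<bar>g y\<bar> \<partial>sig)"
    by (rule integral_abs_bound_integral[OF i1])
       (use g Pk_bound[OF x] f1_nonneg in \<open>auto simp: abs_mult intro!: mult_right_mono\<close>)
  also have "\<dots> = f 1 * (\<integral>y. \<bar>g y\<bar> \<partial>sig)" by simp
  finally show ?thesis .
qed

lemma T_lim:
  assumes x: "x \<in> SS" and g: "integrable sig g" "g \<in> borel_measurable sig"
  shows "(\<lambda>N. Qs g N x) \<longlonglongrightarrow> Tk g x"
proof -
  have "(\<lambda>N. \<integral>y. Pk N x y * g y \<partial>sig) \<longlonglongrightarrow> (\<integral>y. f (x \<bullet> y) * g y \<partial>sig)"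
  proof (rule integral_dominated_convergence[where w="\<lambda>y. f 1 * \<bar>g y\<bar>"])
    show "(\<lambda>y. f (x \<bullet> y) * g y) \<in> borel_measurable sig" using k_meas[OF x] g by measurable
    show "(\<lambda>y. Pk N x y * g y) \<in> borel_measurable sig" for N using Pk_meas[OF x] g by measurable
    show "integrable sig (\<lambda>y. f 1 * \<bar>g y\<bar>)" using g by simp
    show "AE y in sig. (\<lambda>N. Pk N x y * g y) \<longlonglongrightarrow> f (x \<bullet> y) * g y"
      using Pk_tendsto[OF x] by (intro AE_I2) (auto intro!: tendsto_intros)
    show "AE y in sig. norm (Pk N x y * g y) \<le> f 1 * \<bar>g y\<bar>" for N
      using Pk_bound[OF x] f1_nonneg by (intro AE_I2) (auto simp: abs_mult intro!: mult_right_mono)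
  qed
  then show ?thesis using int_Pk[OF x g] by (simp add: Tk_def)
qed

lemma T_meas: "integrable sig g \<Longrightarrow> g \<in> borel_measurable sig \<Longrightarrow> Tk g \<in> borel_measurable sig"
  by (rule borel_measurable_LIMSEQ_real[where u="Qs g"]) (use T_lim Qs_meas in auto)

lemma T_bound:
  assumes x: "x \<in> SS" and g: "integrable sig g" "g \<in> borel_measurable sig"
  shows "\<bar>Tk g x\<bar> \<le> f 1 * (\<integral>y. \<bar>g y\<bar> \<partial>sig)"
proof -
  have "(\<lambda>N. \<bar>Qs g N x\<bar>) \<longlonglongrightarrow> \<bar>Tk g x\<bar>" by (intro tendsto_intros T_lim x g)
  then show ?thesis using Qs_bound[OF x g] by (intro LIMSEQ_le_const2) auto
qed

lemma orth_sum:
  assumes l0: "l0 < a n0"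
  shows "(\<Sum>n<N. \<mu> n * (\<Sum>l<a n. c n l * (\<integral>x. Y n l x * Y n0 l0 x \<partial>sig))) =
     (if n0 < N then \<mu> n0 * c n0 l0 else 0)"
proof -
  have "(\<Sum>n<N. \<mu> n * (\<Sum>l<a n. c n l * (\<integral>x. Y n l x * Y n0 l0 x \<partial>sig))) =
        (\<Sum>n<N. (if n = n0 then \<mu> n0 * c n0 l0 else 0))"
  proof (rule sum.cong[OF refl])
    fix n assume "n \<in> {..<N}"
    have "(\<Sum>l<a n. c n l * (\<integral>x. Y n l x * Y n0 l0 x \<partial>sig)) =
          (\<Sum>l<a n. (if n = n0 \<and> l = l0 then c n l else 0))"
      using orth l0 by (intro sum.cong) auto
    also have "\<dots> = (if n = n0 then c n0 l0 else 0)"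
      using l0 by (cases "n = n0") (auto simp: sum.delta)
    finally show "\<mu> n * (\<Sum>l<a n. c n l * (\<integral>x. Y n l x * Y n0 l0 x \<partial>sig)) = (if n = n0 then \<mu> n0 * c n0 l0 else 0)"
      by simp
  qed
  also have "\<dots> = (if n0 < N then \<mu> n0 * c n0 l0 else 0)" by (simp add: sum.delta)
  finally show ?thesis .
qed

lemma T_Y:
  assumes l: "l < a n" and x: "x \<in> SS"
  shows "Tk (Y n l) x = \<mu> n * Y n l x"
proof -
  interpret finite_measure sig by (rule fin)
  have gi: "integrable sig (Y n l)" by (rule sqi_int1[OF fin Y_sqi[OF l]])
  have gm: "Y n l \<in> borel_measurable sig" by (rule Y_meas[OF l])
  have eq: "Qs (Y n l) N x = (if n < N then \<mu> n * Y n l x else 0)" for N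
  proof -
    have "Qs (Y n l) N x = (\<Sum>n'<N. \<mu> n' * (\<Sum>l'<a n'. Y n' l' x * (\<integral>y. Y n' l' y * Y n l y \<partial>sig)))"
      by (simp add: Qs_def cf_def)
    also have "\<dots> = (if n < N then \<mu> n * Y n l x else 0)"
      by (rule orth_sum[OF l])
    finally show ?thesis .
  qed
  have "(\<lambda>N. Qs (Y n l) N x) \<longlonglongrightarrow> \<mu> n * Y n l x"
  proof (rule tendsto_eventually)
    show "\<forall>\<^sub>F N in sequentially. Qs (Y n l) N x = \<mu> n * Y n l x"
      using eventually_ge_at_top[of "Suc n"] by eventually_elim (simp add: eq)
  qed
  with T_lim[OF x gi gm] show ?thesis by (rule LIMSEQ_unique)
qed

lemma key:
  assumes l0: "l0 < a n0" and g: "integrable sig g" "g \<in> borel_measurable sig"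
  shows "(\<integral>x. Tk g x * Y n0 l0 x \<partial>sig) = \<mu> n0 * cf g n0 l0"
proof -
  obtain B where B: "\<forall>x\<in>SS. \<bar>Y n0 l0 x\<bar> \<le> B" using Y_bdd[OF l0] by blast
  define A where "A = f 1 * (\<integral>y. \<bar>g y\<bar> \<partial>sig)"
  have A0: "A \<ge> 0" unfolding A_def using f1_nonneg by (simp add: integral_nonneg_AE)
  have lim: "(\<lambda>N. \<integral>x. Qs g N x * Y n0 l0 x \<partial>sig) \<longlonglongrightarrow> (\<integral>x. Tk g x * Y n0 l0 x \<partial>sig)"
  proof (rule integral_dominated_convergence[where w="\<lambda>x. A * \<bar>Y n0 l0 x\<bar>"])
    show "(\<lambda>x. Tk g x * Y n0 l0 x) \<in> borel_measurable sig" using T_meas[OF g] Y_meas[OF l0] by measurable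
    show "(\<lambda>x. Qs g N x * Y n0 l0 x) \<in> borel_measurable sig" for N using Qs_meas Y_meas[OF l0] by measurable
    show "integrable sig (\<lambda>x. A * \<bar>Y n0 l0 x\<bar>)"
      using sqi_int1[OF fin Y_sqi[OF l0]] by simp
    show "AE x in sig. (\<lambda>N. Qs g N x * Y n0 l0 x) \<longlonglongrightarrow> Tk g x * Y n0 l0 x"
      using T_lim[OF _ g] by (intro AE_I2) (auto intro!: tendsto_intros)
    show "AE x in sig. norm (Qs g N x * Y n0 l0 x) \<le> A * \<bar>Y n0 l0 x\<bar>" for N
      using Qs_bound[OF _ g] by (intro AE_I2) (auto simp: abs_mult A_def intro!: mult_right_mono)
  qed
  have eq: "(\<integral>x. Qs g N x * Y n0 l0 x \<partial>sig) = (if n0 < N then \<mu> n0 * cf g n0 l0 else 0)" for N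
  proof -
    have int: "integrable sig (\<lambda>x. (\<mu> n * cf g n l) * (Y n l x * Y n0 l0 x))" if "l < a n" for n l
      using sqi_mult_int[OF Y_sqi[OF that] Y_sqi[OF l0]] by simp
    have eqf: "(\<lambda>x. Qs g N x * Y n0 l0 x) = (\<lambda>x. \<Sum>n<N. \<Sum>l<a n. (\<mu> n * cf g n l) * (Y n l x * Y n0 l0 x))"
      by (auto simp: Qs_def sum_distrib_left sum_distrib_right algebra_simps)
    have "(\<integral>x. Qs g N x * Y n0 l0 x \<partial>sig) =
        (\<Sum>n<N. \<Sum>l<a n. (\<mu> n * cf g n l) * (\<integral>x. Y n l x * Y n0 l0 x \<partial>sig))"
      unfolding eqf by (subst integral_double_sum) (use int in \<open>simp_all add: integral_mult_right_zero\<close>)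
    also have "\<dots> = (\<Sum>n<N. \<mu> n * (\<Sum>l<a n. cf g n l * (\<integral>x. Y n l x * Y n0 l0 x \<partial>sig)))"
      by (simp add: sum_distrib_left mult.assoc)
    also have "\<dots> = (if n0 < N then \<mu> n0 * cf g n0 l0 else 0)" by (rule orth_sum[OF l0])
    finally show ?thesis .
  qed
  have "(\<lambda>N. \<integral>x. Qs g N x * Y n0 l0 x \<partial>sig) \<longlonglongrightarrow> \<mu> n0 * cf g n0 l0"
  proof (rule tendsto_eventually)
    show "\<forall>\<^sub>F N in sequentially. (\<integral>x. Qs g N x * Y n0 l0 x \<partial>sig) = \<mu> n0 * cf g n0 l0"
      using eventually_ge_at_top[of "Suc n0"] by eventually_elim (simp add: eq)
  qed
  with lim show ?thesis by (rule LIMSEQ_unique)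
qed

end


context sph
begin

definition Jset :: "nat set \<Rightarrow> (nat \<times> nat) set" where
  "Jset F = (SIGMA n:F. {..<a n})"

abbreviation Yj :: "nat \<times> nat \<Rightarrow> real^'n \<Rightarrow> real" where
  "Yj j \<equiv> Y (fst j) (snd j)"

definition Fge :: "real \<Rightarrow> nat set" where
  "Fge t = {n. \<mu> n \<ge> t}"

lemma n_bound:
  assumes n: "n \<ge> 1" and t: "t > 0" and mt: "\<mu> n \<ge> t"
  shows "real n \<le> (snd cC / t) powr (1 / (real d * \<beta>))"
proof -
  have db: "real d * \<beta> > 0" using d1 beta by simp
  have np: "real n > 0" using n by simp
  have "t \<le> snd cC * real n powr (- (real d * \<beta>))" using cC(4)[OF n] mt by linarith
  then have "t \<le> snd cC / real n powr (real d * \<beta>)" by (simp add: powr_minus divide_inverse)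
  then have "real n powr (real d * \<beta>) \<le> snd cC / t"
    using t np by (simp add: field_simps)
  then have "(real n powr (real d * \<beta>)) powr (1 / (real d * \<beta>)) \<le> (snd cC / t) powr (1 / (real d * \<beta>))"
    using db by (intro powr_mono2) auto
  also have "(real n powr (real d * \<beta>)) powr (1 / (real d * \<beta>)) = real n"
    using db np d1 beta by (simp add: powr_powr)
  finally show ?thesis .
qed

lemma Fge_finite: "t > 0 \<Longrightarrow> finite (Fge t)"
proof -
  assume t: "t > 0"
  define R where "R = (snd cC / t) powr (1 / (real d * \<beta>))"
  have "Fge t \<subseteq> {..nat \<lceil>R\<rceil>}"
  proof
    fix n assume "n \<in> Fge t"
    then have mt: "\<mu> n \<ge> t" by (simp add: Fge_def)
    show "n \<in> {..nat \<lceil>R\<rceil>}"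
    proof (cases "n = 0")
      case False
      then have "real n \<le> R" unfolding R_def using n_bound[OF _ t mt] by simp
      then have "real n \<le> real (nat \<lceil>R\<rceil>)" using real_nat_ceiling_ge[of R] by linarith
      then show ?thesis by simp
    qed simp
  qed
  then show ?thesis by (rule finite_subset) simp
qed

lemma Jset_finite: "finite F \<Longrightarrow> finite (Jset F)"
  unfolding Jset_def by (rule finite_SigmaI) auto

lemma card_Jset: "finite F \<Longrightarrow> card (Jset F) = (\<Sum>n\<in>F. a n)"
  unfolding Jset_def by (simp add: card_SigmaI)

lemma Yj_sqi: "j \<in> Jset F \<Longrightarrow> sqi sig (Yj j)"
  unfolding Jset_def by (auto intro: Y_sqi)

lemma Yj_orth: "j \<in> Jset F \<Longrightarrow> j' \<in> Jset F' \<Longrightarrow>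
    (\<integral>x. Yj j x * Yj j' x \<partial>sig) = (if j = j' then 1 else 0)"
  unfolding Jset_def using orth by (auto simp: prod_eq_iff)

lemma span_Y:
  assumes F: "finite F" and h: "sqi sig h"
    and z: "\<And>n l. l < a n \<Longrightarrow> n \<notin> F \<Longrightarrow> cf h n l = 0"
  shows "AE x in sig. h x = (\<Sum>j\<in>Jset F. cf h (fst j) (snd j) * Yj j x)"
proof -
  define s where "s x = (\<Sum>j\<in>Jset F. cf h (fst j) (snd j) * Yj j x)" for x
  have s: "sqi sig s" unfolding s_def using Jset_finite[OF F] Yj_sqi
    by (intro sqi_sum sqi_cmult) auto
  define g where "g x = h x - s x" for x
  have g: "sqi sig g" unfolding g_def by (rule sqi_diff[OF h s])
  have "AE x in sig. g x = 0"
  proof (rule complete)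
    show "g \<in> borel_measurable sig" using g by (simp add: sqi_def)
    show "integrable sig (\<lambda>x. (g x)\<^sup>2)" using g by (simp add: sqi_def)
    show "\<forall>n l. l < a n \<longrightarrow> (\<integral>x. g x * Y n l x \<partial>sig) = 0"
    proof (intro allI impI)
      fix n l assume l: "l < a n"
      have Ys: "sqi sig (Y n l)" by (rule Y_sqi[OF l])
      have gf: "(\<lambda>x. g x * Y n l x) = (\<lambda>x. h x * Y n l x - Y n l x * s x)"
        by (auto simp: g_def algebra_simps)
      have e1: "(\<integral>x. g x * Y n l x \<partial>sig) = (\<integral>x. h x * Y n l x \<partial>sig) - (\<integral>x. Y n l x * s x \<partial>sig)"
        unfolding gf using sqi_mult_int[OF h Ys] sqi_mult_int[OF Ys s]
        by (rule Bochner_Integration.integral_diff)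
      have e2: "(\<integral>x. Y n l x * s x \<partial>sig) = (\<Sum>j\<in>Jset F. cf h (fst j) (snd j) * (\<integral>x. Y n l x * Yj j x \<partial>sig))"
        by (rule integral_expand_AE[OF Jset_finite[OF F] _ sqi_meas[OF s] Ys Yj_sqi]) (auto simp: s_def)
      also have "\<dots> = (\<Sum>j\<in>Jset F. if j = (n, l) then cf h n l else 0)"
      proof (rule sum.cong[OF refl])
        fix j assume j: "j \<in> Jset F"
        have "(n, l) \<in> Jset UNIV" using l by (simp add: Jset_def)
        then have "(\<integral>x. Y n l x * Yj j x \<partial>sig) = (if (n, l) = j then 1 else 0)"
          using Yj_orth[of "(n,l)" UNIV j F] j by simp
        then show "cf h (fst j) (snd j) * (\<integral>x. Y n l x * Yj j x \<partial>sig) = (if j = (n, l) then cf h n l else 0)"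
          by auto
      qed
      also have "\<dots> = (if n \<in> F then cf h n l else 0)"
        using Jset_finite[OF F] l by (simp add: sum.delta Jset_def)
      finally have e3: "(\<integral>x. Y n l x * s x \<partial>sig) = (if n \<in> F then cf h n l else 0)" .
      have "(\<integral>x. h x * Y n l x \<partial>sig) = cf h n l" by (simp add: cf_def mult.commute)
      then show "(\<integral>x. g x * Y n l x \<partial>sig) = 0"
        using e1 e3 z[OF l] by auto
    qed
  qed
  then show ?thesis by (simp add: g_def s_def)
qed

lemma cf_zero_eig:
  assumes g: "integrable sig g" "g \<in> borel_measurable sig"
    and eig: "AE x in sig. Tk g x = v * g x"
    and l: "l < a n" and ne: "\<mu> n \<noteq> v"
  shows "cf g n l = 0"
proof -
  have "(\<integral>x. Tk g x * Y n l x \<partial>sig) = (\<integral>x. v * (Y n l x * g x) \<partial>sig)"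
  proof (rule integral_cong_AE)
    show "(\<lambda>x. Tk g x * Y n l x) \<in> borel_measurable sig" using T_meas[OF g] Y_meas[OF l] by measurable
    show "(\<lambda>x. v * (Y n l x * g x)) \<in> borel_measurable sig" using g Y_meas[OF l] by measurable
    show "AE x in sig. Tk g x * Y n l x = v * (Y n l x * g x)"
      using eig by eventually_elim simp
  qed
  then have "\<mu> n * cf g n l = v * cf g n l" using key[OF l g] by (simp add: cf_def)
  then show ?thesis using ne by simp
qed

end


context sph
begin

lemma Yj_sq1: "j \<in> Jset F \<Longrightarrow> (\<integral>x. (Yj j x)\<^sup>2 \<partial>sig) = 1"
  using Yj_orth[of j F j F] by (simp add: power2_eq_square)

context
  fixes lam :: "nat \<Rightarrow> real" and e :: "nat \<Rightarrow> real^'n \<Rightarrow> real"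
  assumes ss: "spectral_system sig (\<lambda>x y. f (x \<bullet> y)) lam e"
begin

lemma ss_sqi: "sqi sig (e i)"
  using ss by (simp add: spectral_system_def sqi_def)

lemma ss_int: "integrable sig (e i)"
  by (rule sqi_int1[OF fin ss_sqi])

lemma ss_meas: "e i \<in> borel_measurable sig"
  by (rule sqi_meas[OF ss_sqi])

lemma ss_on: "(\<integral>x. e i x * e j x \<partial>sig) = (if i = j then 1 else 0)"
  using ss by (simp add: spectral_system_def)

lemma ss_sq1: "(\<integral>x. (e i x)\<^sup>2 \<partial>sig) = 1"
  using ss_on[of i i] by (simp add: power2_eq_square)

lemma ss_anti: "antimono lam"
  using ss by (simp add: spectral_system_def)

lemma ss_pos: "lam i > 0"
  using ss by (simp add: spectral_system_def)

lemma ss_eig: "AE x in sig. Tk (e i) x = lam i * e i x"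
  using ss by (simp add: spectral_system_def Tk_def)

lemma ss_compl: "g \<in> borel_measurable sig \<Longrightarrow> integrable sig (\<lambda>x. (g x)\<^sup>2) \<Longrightarrow>
   (\<forall>i. (\<integral>x. g x * e i x \<partial>sig) = 0) \<Longrightarrow> AE x in sig. Tk g x = 0"
  using ss unfolding spectral_system_def Tk_def by blast

lemma ss_cf0: "l < a n \<Longrightarrow> \<mu> n \<noteq> lam i \<Longrightarrow> cf (e i) n l = 0"
  by (rule cf_zero_eig[OF ss_int ss_meas ss_eig])

lemma ss_count1:
  assumes t: "t > 0" and I: "finite I" "I \<subseteq> {i. lam i \<ge> t}"
  shows "card I \<le> card (Jset (Fge t))"
proof -
  define K where "K = Jset (Fge t)"
  have K: "finite K" unfolding K_def by (rule Jset_finite[OF Fge_finite[OF t]])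
  have full: "(\<Sum>j\<in>K. (\<integral>x. e i x * Yj j x \<partial>sig)\<^sup>2) = 1" if i: "i \<in> I" for i
  proof -
    have lt: "lam i \<ge> t" using I i by auto
    have ae: "AE x in sig. e i x = (\<Sum>j\<in>K. cf (e i) (fst j) (snd j) * Yj j x)"
      unfolding K_def
    proof (rule span_Y[OF Fge_finite[OF t] ss_sqi])
      fix n l assume l: "l < a n" and n: "n \<notin> Fge t"
      then have "\<mu> n \<noteq> lam i" using lt by (auto simp: Fge_def)
      then show "cf (e i) n l = 0" by (rule ss_cf0[OF l])
    qed
    have "(\<integral>x. e i x * e i x \<partial>sig) = (\<Sum>j\<in>K. cf (e i) (fst j) (snd j) * (\<integral>x. e i x * Yj j x \<partial>sig))"
      by (rule integral_expand_AE[OF K ae ss_meas ss_sqi]) (use Yj_sqi K_def in auto)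
    also have "\<dots> = (\<Sum>j\<in>K. (\<integral>x. e i x * Yj j x \<partial>sig)\<^sup>2)"
      by (simp add: cf_def power2_eq_square mult.commute)
    finally show ?thesis using ss_on[of i i] by simp
  qed
  show ?thesis
    unfolding K_def[symmetric]
  proof (rule count_le[OF K I(1)])
    show "sqi sig (e i)" for i by (rule ss_sqi)
    show "(\<integral>x. e i x * e i' x \<partial>sig) = (if i = i' then 1 else 0)" for i i' by (rule ss_on)
    show "sqi sig (Yj j)" if "j \<in> K" for j using that Yj_sqi K_def by auto
    show "(\<integral>x. (Yj j x)\<^sup>2 \<partial>sig) = 1" if "j \<in> K" for j using that Yj_sq1 K_def by auto
    show "(\<Sum>j\<in>K. (\<integral>x. e i x * Yj j x \<partial>sig)\<^sup>2) = 1" if "i \<in> I" for i by (rule full[OF that])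
  qed
qed

lemma ss_finite:
  assumes t: "t > 0"
  shows "finite {i. lam i \<ge> t}" and "card {i. lam i \<ge> t} \<le> card (Jset (Fge t))"
proof -
  show fin: "finite {i. lam i \<ge> t}"
  proof (rule ccontr)
    assume "infinite {i. lam i \<ge> t}"
    then obtain B where B: "finite B" "card B = Suc (card (Jset (Fge t)))" "B \<subseteq> {i. lam i \<ge> t}"
      using infinite_arbitrarily_large by blast
    then show False using ss_count1[OF t B(1) B(3)] by simp
  qed
  show "card {i. lam i \<ge> t} \<le> card (Jset (Fge t))"
    by (rule ss_count1[OF t fin]) simp
qed

lemma ss_count2:
  assumes t: "t > 0"
  shows "card (Jset (Fge t)) \<le> card {i. lam i \<ge> t}"
proof -
  define K where "K = Jset (Fge t)"
  define It where "It = {i. lam i \<ge> t}"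
  have K: "finite K" unfolding K_def by (rule Jset_finite[OF Fge_finite[OF t]])
  have It: "finite It" unfolding It_def by (rule ss_finite(1)[OF t])
  have full: "(\<Sum>i\<in>It. (\<integral>x. Yj j x * e i x \<partial>sig)\<^sup>2) = 1" if j: "j \<in> K" for j
  proof -
    obtain n l where jnl: "j = (n, l)" by (cases j)
    have l: "l < a n" and mn: "\<mu> n \<ge> t" using j jnl by (auto simp: K_def Jset_def Fge_def)
    have Ys: "sqi sig (Y n l)" by (rule Y_sqi[OF l])
    define c where "c i = (\<integral>x. Y n l x * e i x \<partial>sig)" for i
    define s where "s x = (\<Sum>i\<in>It. c i * e i x)" for x
    have s: "sqi sig s" unfolding s_def using It ss_sqi by (intro sqi_sum sqi_cmult) auto
    define h where "h x = Y n l x - s x" for x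
    have h: "sqi sig h" unfolding h_def by (rule sqi_diff[OF Ys s])
    have hi: "integrable sig h" by (rule sqi_int1[OF fin h])
    have hm: "h \<in> borel_measurable sig" by (rule sqi_meas[OF h])
    have es: "(\<integral>x. w x * s x \<partial>sig) = (\<Sum>i\<in>It. c i * (\<integral>x. w x * e i x \<partial>sig))" if w: "sqi sig w" for w
      by (rule integral_expand_AE[OF It _ sqi_meas[OF s] w ss_sqi]) (auto simp: s_def)
    have hs: "(\<integral>x. w x * h x \<partial>sig) = (\<integral>x. w x * Y n l x \<partial>sig) - (\<integral>x. w x * s x \<partial>sig)" if w: "sqi sig w" for w
    proof -
      have "(\<lambda>x. w x * h x) = (\<lambda>x. w x * Y n l x - w x * s x)" by (auto simp: h_def algebra_simps)
      then show ?thesis using sqi_mult_int[OF w Ys] sqi_mult_int[OF w s]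
        by (simp add: Bochner_Integration.integral_diff)
    qed
    have orth_h: "(\<integral>x. h x * e i' x \<partial>sig) = 0" for i'
    proof -
      have "(\<integral>x. h x * e i' x \<partial>sig) = (\<integral>x. e i' x * h x \<partial>sig)" by (simp add: mult.commute)
      also have "\<dots> = c i' - (\<Sum>i\<in>It. c i * (\<integral>x. e i' x * e i x \<partial>sig))"
        using hs[OF ss_sqi] es[OF ss_sqi] by (simp add: c_def mult.commute)
      also have "(\<Sum>i\<in>It. c i * (\<integral>x. e i' x * e i x \<partial>sig)) = (\<Sum>i\<in>It. if i = i' then c i' else 0)"
        by (intro sum.cong refl) (auto simp: ss_on)
      also have "\<dots> = (if i' \<in> It then c i' else 0)" using It by (simp add: sum.delta')
      finally have eq: "(\<integral>x. h x * e i' x \<partial>sig) = c i' - (if i' \<in> It then c i' else 0)" .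
      show ?thesis
      proof (cases "i' \<in> It")
        case True then show ?thesis using eq by simp
      next
        case False
        then have "lam i' < t" by (simp add: It_def)
        then have "\<mu> n \<noteq> lam i'" using mn by auto
        then have "cf (e i') n l = 0" by (rule ss_cf0[OF l])
        then have "c i' = 0" by (simp add: c_def cf_def)
        then show ?thesis using eq False by simp
      qed
    qed
    have "AE x in sig. Tk h x = 0"
      by (rule ss_compl) (use h orth_h in \<open>auto simp: sqi_def\<close>)
    then have "(\<integral>x. Tk h x * Y n l x \<partial>sig) = 0"
      by (intro integral_eq_zero_AE) (auto elim: AE_mp)
    then have "\<mu> n * cf h n l = 0" using key[OF l hi hm] by simp
    moreover have "\<mu> n > 0" using mn t by simp
    ultimately have cf0: "cf h n l = 0" by simp
    have "cf h n l = (\<integral>x. Y n l x * Y n l x \<partial>sig) - (\<Sum>i\<in>It. c i * c i)"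
      using hs[OF Ys] es[OF Ys] by (simp add: cf_def c_def)
    also have "(\<integral>x. Y n l x * Y n l x \<partial>sig) = 1" using orth[OF l l] by simp
    finally have "(\<Sum>i\<in>It. c i * c i) = 1" using cf0 by simp
    then show ?thesis by (simp add: jnl c_def power2_eq_square)
  qed
  show ?thesis
    unfolding K_def[symmetric] It_def[symmetric]
  proof (rule count_le[OF It K])
    show "sqi sig (Yj j)" if "j \<in> K" for j using that Yj_sqi K_def by auto
    show "(\<integral>x. Yj j x * Yj j' x \<partial>sig) = (if j = j' then 1 else 0)" if "j \<in> K" "j' \<in> K" for j j'
      using that Yj_orth K_def by auto
    show "sqi sig (e i)" for i by (rule ss_sqi)
    show "(\<integral>x. (e i x)\<^sup>2 \<partial>sig) = 1" for i by (rule ss_sq1)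
    show "(\<Sum>i\<in>It. (\<integral>x. Yj j x * e i x \<partial>sig)\<^sup>2) = 1" if "j \<in> K" for j by (rule full[OF that])
  qed
qed

lemma ss_card:
  assumes t: "t > 0"
  shows "card {i. lam i \<ge> t} = (\<Sum>n\<in>Fge t. a n)"
  using ss_finite(2)[OF t] ss_count2[OF t] card_Jset[OF Fge_finite[OF t]] by simp

end

end


lemma hd_pos:
  assumes d: "d \<ge> 1"
  shows "harm_dim d n \<ge> 1"
proof -
  obtain e where e: "d = Suc e" using d by (cases d) auto
  show ?thesis
  proof (cases "n \<ge> 2")
    case True
    have p: "(n + d choose d) = (n + e choose e) + (n + e choose Suc e)"
      using binomial_Suc_Suc[of "n + e" e] by (simp add: e)
    have A: "(n + e choose e) \<ge> 1" using zero_less_binomial[of e "n + e", OF le_add2] by linarith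
    have B: "(n - 2 + d choose d) \<le> (n + e choose Suc e)"
      using binomial_right_mono[of "n - 2 + d" "n + e" "Suc e"] e True by simp
    have "harm_dim d n = (n + e choose e) + (n + e choose Suc e) - (n - 2 + d choose d)"
      by (simp only: hd_alt if_P[OF True] p)
    then show ?thesis using A B by arith
  next
    case False
    then have "n = 0 \<or> n = 1" by auto
    then show ?thesis by (auto simp: hd_alt)
  qed
qed

context sph
begin

definition Jp :: "(nat \<times> nat) set" where
  "Jp = {j. snd j < a (fst j) \<and> \<mu> (fst j) > 0}"

definition prec :: "nat \<times> nat \<Rightarrow> nat \<times> nat \<Rightarrow> bool" where
  "prec j j' \<longleftrightarrow> \<mu> (fst j) > \<mu> (fst j') \<or> (\<mu> (fst j) = \<mu> (fst j') \<and> prod_encode j < prod_encode j')"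

definition rank :: "nat \<times> nat \<Rightarrow> nat" where
  "rank j = card {j' \<in> Jp. prec j' j}"

lemma prec_trans: "prec x y \<Longrightarrow> prec y z \<Longrightarrow> prec x z"
  unfolding prec_def by auto

lemma prec_irrefl: "\<not> prec x x"
  unfolding prec_def by auto

lemma prec_total: "x \<noteq> y \<Longrightarrow> prec x y \<or> prec y x"
proof -
  assume "x \<noteq> y"
  then have enc: "prod_encode x \<noteq> prod_encode y" using inj_prod_encode[of UNIV] by (auto simp: inj_on_def)
  have "prod_encode x < prod_encode y \<or> prod_encode y < prod_encode x"
    using enc linorder_neqE_nat by blast
  then show ?thesis unfolding prec_def by auto
qed

lemma pred_finite: "j \<in> Jp \<Longrightarrow> finite {j' \<in> Jp. prec j' j}"
proof -
  assume j: "j \<in> Jp"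
  define t where "t = \<mu> (fst j)"
  have t: "t > 0" using j by (simp add: Jp_def t_def)
  have "{j' \<in> Jp. prec j' j} \<subseteq> Jset (Fge t)"
    by (auto simp: Jp_def prec_def Jset_def Fge_def t_def)
  then show ?thesis by (rule finite_subset) (rule Jset_finite[OF Fge_finite[OF t]])
qed

lemma rank_less: "j \<in> Jp \<Longrightarrow> j' \<in> Jp \<Longrightarrow> prec j j' \<Longrightarrow> rank j < rank j'"
proof -
  assume j: "j \<in> Jp" and j': "j' \<in> Jp" and p: "prec j j'"
  have "{x \<in> Jp. prec x j} \<subset> {x \<in> Jp. prec x j'}"
    using p j prec_trans prec_irrefl by blast
  then show ?thesis unfolding rank_def by (rule psubset_card_mono[OF pred_finite[OF j']])
qed

lemma rank_inj: "inj_on rank Jp"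
proof (rule inj_onI)
  fix x y assume x: "x \<in> Jp" and y: "y \<in> Jp" and eq: "rank x = rank y"
  show "x = y"
  proof (rule ccontr)
    assume "x \<noteq> y"
    then have "prec x y \<or> prec y x" by (rule prec_total)
    then show False using rank_less[OF x y] rank_less[OF y x] eq by auto
  qed
qed

lemma Jp_infinite: "infinite Jp"
proof -
  have "(\<lambda>n. (Suc n, 0)) ` UNIV \<subseteq> Jp"
    using hd_pos[OF d1] mu_pos by (auto simp: Jp_def Suc_le_eq)
  moreover have "infinite ((\<lambda>n. (Suc n, 0::nat)) ` (UNIV :: nat set))"
    by (rule range_inj_infinite) (auto simp: inj_def)
  ultimately show ?thesis using infinite_super by blast
qed

definition phi :: "nat \<Rightarrow> nat \<times> nat" where
  "phi i = inv_into Jp rank (enumerate (rank ` Jp) i)"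

lemma R_inf: "infinite (rank ` Jp)"
  using Jp_infinite rank_inj finite_imageD by blast

lemma phi_bij: "bij_betw phi UNIV Jp"
proof -
  have b1: "bij_betw (enumerate (rank ` Jp)) UNIV (rank ` Jp)" by (rule bij_enumerate[OF R_inf])
  have b2: "bij_betw (inv_into Jp rank) (rank ` Jp) Jp"
    by (rule bij_betw_inv_into) (simp add: bij_betw_def rank_inj)
  have "bij_betw (inv_into Jp rank \<circ> enumerate (rank ` Jp)) UNIV Jp"
    by (rule bij_betw_trans[OF b1 b2])
  then show ?thesis by (simp add: phi_def[abs_def] o_def)
qed

lemma phi_in: "phi i \<in> Jp"
  using phi_bij by (auto simp: bij_betw_def)

lemma rank_phi: "rank (phi i) = enumerate (rank ` Jp) i"
  unfolding phi_def by (rule f_inv_into_f) (rule enumerate_in_set[OF R_inf])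

lemma phi_anti: "antimono (\<lambda>i. \<mu> (fst (phi i)))"
proof (rule antimonoI)
  fix i j :: nat assume ij: "i \<le> j"
  show "\<mu> (fst (phi j)) \<le> \<mu> (fst (phi i))"
  proof (rule ccontr)
    assume "\<not> ?thesis"
    then have "prec (phi j) (phi i)" by (simp add: prec_def)
    then have "rank (phi j) < rank (phi i)" by (rule rank_less[OF phi_in phi_in])
    then show False using ij R_inf by (simp add: rank_phi)
  qed
qed

lemma exists_ss: "\<exists>lam e. spectral_system sig (\<lambda>x y. f (x \<bullet> y)) lam e"
proof (intro exI)
  define lam where "lam i = \<mu> (fst (phi i))" for i
  define e where "e i = Yj (phi i)" for i
  have inJ: "snd (phi i) < a (fst (phi i))" "\<mu> (fst (phi i)) > 0" for i
    using phi_in[of i] by (auto simp: Jp_def)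
  have injphi: "inj phi" using phi_bij by (simp add: bij_betw_def)
  show "spectral_system sig (\<lambda>x y. f (x \<bullet> y)) lam e"
    unfolding spectral_system_def
  proof (intro conjI allI ballI impI)
    fix i
    show "e i \<in> borel_measurable sig" unfolding e_def by (rule Y_meas[OF inJ(1)])
    show "integrable sig (\<lambda>x. (e i x)\<^sup>2)" unfolding e_def using Y_sqi[OF inJ(1)] by (simp add: sqi_def)
    show "lam i > 0" unfolding lam_def by (rule inJ(2))
    show "AE x in sig. (\<integral>y. f (x \<bullet> y) * e i y \<partial>sig) = lam i * e i x"
      using T_Y[OF inJ(1)] by (intro AE_I2) (simp add: Tk_def e_def lam_def)
  next
    fix i j
    have "(\<integral>x. e i x * e j x \<partial>sig) = (if phi i = phi j then 1 else 0)"
      unfolding e_def using orth[OF inJ(1) inJ(1)] by (simp add: prod_eq_iff)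
    then show "(\<integral>x. e i x * e j x \<partial>sig) = (if i = j then 1 else 0)"
      using injphi by (auto simp: inj_def)
  next
    show "antimono lam" unfolding lam_def by (rule phi_anti)
  next
    fix g assume gm: "g \<in> borel_measurable sig" and g2: "integrable sig (\<lambda>x. (g x)\<^sup>2)"
      and go: "\<forall>i. (\<integral>x. g x * e i x \<partial>sig) = 0"
    have gs: "sqi sig g" using gm g2 by (simp add: sqi_def)
    have gi: "integrable sig g" by (rule sqi_int1[OF fin gs])
    have cf0: "\<mu> n * cf g n l = 0" if l: "l < a n" for n l
    proof (cases "\<mu> n > 0")
      case True
      then have "(n, l) \<in> Jp" using l by (simp add: Jp_def)
      then obtain i where i: "phi i = (n, l)" using phi_bij by (metis bij_betw_imp_surj_on imageE)
      have "cf g n l = (\<integral>x. g x * e i x \<partial>sig)" by (simp add: cf_def e_def i mult.commute)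
      then show ?thesis using go by simp
    next
      case False
      then show ?thesis using mu_ge0[of n] by simp
    qed
    have "Tk g x = 0" if x: "x \<in> SS" for x
    proof -
      have "Qs g N x = 0" for N
      proof -
        have "Qs g N x = (\<Sum>n<N. \<Sum>l<a n. (\<mu> n * cf g n l) * Y n l x)"
          by (simp add: Qs_def sum_distrib_left mult_ac)
        also have "\<dots> = 0" using cf0 by (auto intro!: sum.neutral)
        finally show ?thesis .
      qed
      then have "(\<lambda>N. Qs g N x) \<longlonglongrightarrow> 0" by simp
      with T_lim[OF x gi gm] show ?thesis using LIMSEQ_unique by blast
    qed
    then show "AE x in sig. (\<integral>y. f (x \<bullet> y) * g y \<partial>sig) = 0"
      by (intro AE_I2) (simp add: Tk_def)
  qed
qed

end


context sph
begin

lemma bdd_sqi: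
  assumes m: "h \<in> borel_measurable sig" and B: "\<And>x. x \<in> SS \<Longrightarrow> \<bar>h x\<bar> \<le> B"
  shows "sqi sig h"
proof -
  interpret finite_measure sig by (rule fin)
  have "integrable sig (\<lambda>x. (h x)\<^sup>2)"
  proof (rule integrable_const_bound[where B="B\<^sup>2"])
    show "AE x in sig. norm ((h x)\<^sup>2) \<le> B\<^sup>2"
    proof (rule AE_I2)
      fix x assume "x \<in> space sig"
      then have "\<bar>h x\<bar> \<le> B" using B by simp
      then have "\<bar>h x\<bar>\<^sup>2 \<le> B\<^sup>2" by (intro power_mono) auto
      then show "norm ((h x)\<^sup>2) \<le> B\<^sup>2" by simp
    qed
    show "(\<lambda>x. (h x)\<^sup>2) \<in> borel_measurable sig" using m by measurable
  qed
  then show ?thesis using m by (simp add: sqi_def)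
qed

context
  fixes v :: real
  assumes v: "v > 0"
begin

definition Fv :: "nat set" where "Fv = {n. \<mu> n = v}"
definition Jv :: "(nat \<times> nat) set" where "Jv = Jset Fv"
definition Gv :: "real^'n \<Rightarrow> real" where "Gv x = (\<Sum>j\<in>Jv. (Yj j x)\<^sup>2)"

lemma Fv_finite: "finite Fv"
proof -
  have "Fv \<subseteq> Fge v" by (auto simp: Fv_def Fge_def)
  then show ?thesis using Fge_finite[OF v] by (rule finite_subset)
qed

lemma Jv_finite: "finite Jv" unfolding Jv_def by (rule Jset_finite[OF Fv_finite])

lemma Jv_mem: "j \<in> Jv \<Longrightarrow> snd j < a (fst j) \<and> \<mu> (fst j) = v"
  by (auto simp: Jv_def Jset_def Fv_def)

lemma Gv_cont: "continuous_on SS Gv"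
  unfolding Gv_def using Jv_mem Y_cont by (intro continuous_intros) auto

lemma Gv_contQ:
  assumes Q: "orthogonal_transformation Q"
  shows "continuous_on SS (\<lambda>x. Gv (Q x))"
proof -
  have "continuous_on SS Q"
    using Q orthogonal_transformation_linear linear_conv_bounded_linear linear_continuous_on by blast
  moreover have "Q ` SS \<subseteq> SS" using Q_sphere[OF Q] by auto
  ultimately show ?thesis using continuous_on_compose2[OF Gv_cont] by blast
qed

context
  fixes Q :: "real^'n \<Rightarrow> real^'n"
  assumes Q: "orthogonal_transformation Q"
begin

definition hQ :: "nat \<times> nat \<Rightarrow> real^'n \<Rightarrow> real" where "hQ j x = Yj j (Q x)"

lemma QS: "x \<in> SS \<Longrightarrow> Q x \<in> SS" using Q_sphere[OF Q] by simp

lemma hQ_meas: "j \<in> Jv \<Longrightarrow> hQ j \<in> borel_measurable sig"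
  unfolding hQ_def using measurable_compose[OF Q_meas_sm[OF Q] Y_meas] Jv_mem by blast

lemma hQ_sqi: "j \<in> Jv \<Longrightarrow> sqi sig (hQ j)"
proof -
  assume j: "j \<in> Jv"
  obtain B where B: "\<forall>x\<in>SS. \<bar>Yj j x\<bar> \<le> B" using Y_bdd Jv_mem[OF j] by blast
  show ?thesis by (rule bdd_sqi[OF hQ_meas[OF j], of B]) (use B QS in \<open>auto simp: hQ_def\<close>)
qed

lemma hQ_T: "j \<in> Jv \<Longrightarrow> x \<in> SS \<Longrightarrow> Tk (hQ j) x = v * hQ j x"
proof -
  assume j: "j \<in> Jv" and x: "x \<in> SS"
  have l: "snd j < a (fst j)" and mv: "\<mu> (fst j) = v" using Jv_mem[OF j] by auto
  have "Tk (hQ j) x = (\<integral>y. f (Q x \<bullet> Q y) * Yj j (Q y) \<partial>sig)"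
    unfolding Tk_def hQ_def using Q by (simp add: orthogonal_transformation_def)
  also have "\<dots> = (\<integral>y. f (Q x \<bullet> y) * Yj j y \<partial>sig)"
    by (rule sm_integral_invariant[OF Q, where g="\<lambda>y. f (Q x \<bullet> y) * Yj j y"])
       (use k_meas[OF QS[OF x]] Y_meas[OF l] in measurable)
  also have "\<dots> = Tk (Yj j) (Q x)" by (simp add: Tk_def)
  also have "\<dots> = v * hQ j x" using T_Y[OF l QS[OF x]] mv by (simp add: hQ_def)
  finally show ?thesis .
qed

lemma hQ_span: "j \<in> Jv \<Longrightarrow> AE x in sig. hQ j x = (\<Sum>j'\<in>Jv. cf (hQ j) (fst j') (snd j') * Yj j' x)"
proof -
  assume j: "j \<in> Jv"
  have hi: "integrable sig (hQ j)" by (rule sqi_int1[OF fin hQ_sqi[OF j]])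
  have eig: "AE x in sig. Tk (hQ j) x = v * hQ j x" using hQ_T[OF j] by (intro AE_I2) simp
  show ?thesis unfolding Jv_def
  proof (rule span_Y[OF Fv_finite hQ_sqi[OF j]])
    fix n l assume l: "l < a n" and n: "n \<notin> Fv"
    then have "\<mu> n \<noteq> v" by (simp add: Fv_def)
    then show "cf (hQ j) n l = 0" by (rule cf_zero_eig[OF hi hQ_meas[OF j] eig l])
  qed
qed

lemma hQ_orth: "j \<in> Jv \<Longrightarrow> j'' \<in> Jv \<Longrightarrow>
  (\<Sum>j'\<in>Jv. cf (hQ j) (fst j') (snd j') * cf (hQ j'') (fst j') (snd j')) = (if j = j'' then 1 else 0)"
proof -
  assume j: "j \<in> Jv" and j'': "j'' \<in> Jv"
  have "(\<integral>x. hQ j'' x * hQ j x \<partial>sig) = (\<Sum>j'\<in>Jv. cf (hQ j) (fst j') (snd j') * (\<integral>x. hQ j'' x * Yj j' x \<partial>sig))"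
    by (rule integral_expand_AE[OF Jv_finite hQ_span[OF j] hQ_meas[OF j] hQ_sqi[OF j'']])
       (use Jv_mem Y_sqi in auto)
  also have "\<dots> = (\<Sum>j'\<in>Jv. cf (hQ j) (fst j') (snd j') * cf (hQ j'') (fst j') (snd j'))"
    by (simp add: cf_def mult.commute)
  finally have e1: "(\<integral>x. hQ j'' x * hQ j x \<partial>sig) = \<dots>" .
  have "(\<integral>x. hQ j'' x * hQ j x \<partial>sig) = (\<integral>x. Yj j'' x * Yj j x \<partial>sig)"
    unfolding hQ_def
    by (rule sm_integral_invariant[OF Q, where g="\<lambda>x. Yj j'' x * Yj j x"])
       (use Y_meas[OF conjunct1[OF Jv_mem[OF j]]] Y_meas[OF conjunct1[OF Jv_mem[OF j'']]] in measurable)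
  also have "\<dots> = (if j = j'' then 1 else 0)"
    using Yj_orth[of j'' Fv j Fv] j j'' by (auto simp: Jv_def)
  finally show ?thesis using e1 by simp
qed

lemma Gv_Q_le: "x \<in> SS \<Longrightarrow> Gv (Q x) \<le> Gv x"
proof -
  assume x: "x \<in> SS"
  have ae: "AE x in sig. \<forall>j\<in>Jv. hQ j x = (\<Sum>j'\<in>Jv. cf (hQ j) (fst j') (snd j') * Yj j' x)"
    by (rule AE_finite_allI[OF Jv_finite]) (rule hQ_span)
  have "AE x in sig. 0 \<le> Gv x - Gv (Q x)"
    using ae
  proof eventually_elim
    case (elim x)
    have "Gv (Q x) = (\<Sum>j\<in>Jv. (hQ j x)\<^sup>2)" by (simp add: Gv_def hQ_def)
    also have "\<dots> = (\<Sum>j\<in>Jv. (\<Sum>j'\<in>Jv. Yj j' x * cf (hQ j) (fst j') (snd j'))\<^sup>2)"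
      using elim by (intro sum.cong refl) (simp add: mult.commute)
    also have "\<dots> \<le> (\<Sum>j'\<in>Jv. (Yj j' x)\<^sup>2)"
      by (rule bessel_finite[OF Jv_finite Jv_finite hQ_orth])
    finally show ?case by (simp add: Gv_def)
  qed
  then have "0 \<le> Gv x - Gv (Q x)"
    by (rule sm_continuous_ge[OF continuous_on_diff[OF Gv_cont Gv_contQ[OF Q]] _ x])
  then show ?thesis by simp
qed

end

lemma Gv_le: "x \<in> SS \<Longrightarrow> y \<in> SS \<Longrightarrow> Gv y \<le> Gv x"
proof -
  assume x: "x \<in> SS" and y: "y \<in> SS"
  then have "norm x = norm y" by simp
  then obtain Q where Q: "orthogonal_transformation Q" "Q x = y"
    by (rule orthogonal_transformation_exists)
  show ?thesis using Gv_Q_le[OF Q(1) x] Q(2) by simp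
qed

lemma Gv_val: "x \<in> SS \<Longrightarrow> Gv x = real (card Jv)"
proof -
  assume x: "x \<in> SS"
  have "(\<integral>y. Gv y \<partial>sig) = (\<Sum>j\<in>Jv. \<integral>y. (Yj j y)\<^sup>2 \<partial>sig)"
    unfolding Gv_def
    by (rule Bochner_Integration.integral_sum) (use Jv_mem Y_sqi in \<open>auto simp: sqi_def\<close>)
  also have "\<dots> = real (card Jv)" using Yj_sq1 by (simp add: Jv_def)
  finally have i1: "(\<integral>y. Gv y \<partial>sig) = real (card Jv)" .
  have "(\<integral>y. Gv y \<partial>sig) = (\<integral>y. Gv x \<partial>sig)"
    by (rule Bochner_Integration.integral_cong[OF refl])
       (use Gv_le[OF x] Gv_le[OF _ x] in \<open>auto intro: antisym\<close>)
  also have "\<dots> = Gv x" using prob_space.prob_space[OF prob] by simp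
  finally show ?thesis using i1 by simp
qed

end

end


context sph
begin

definition wa :: "real \<Rightarrow> nat \<Rightarrow> real" where
  "wa \<alpha> n = (if \<mu> n > 0 then \<mu> n powr \<alpha> * real (a n) else 0)"

lemma wa_nonneg: "wa \<alpha> n \<ge> 0"
  by (simp add: wa_def)

lemma wa_summable:
  assumes al: "\<alpha> > 1 / \<beta>"
  shows "summable (wa \<alpha>)"
proof -
  have bp: "\<beta> > 0" using beta by simp
  have a0: "\<alpha> > 0" using al bp by (smt (verit) divide_pos_pos)
  have ab: "\<alpha> * \<beta> > 1" using al bp by (simp add: field_simps)
  define p where "p = real d - 1 - real d * \<beta> * \<alpha>"
  have p: "p < -1"
  proof -
    have "real d * (\<beta> * \<alpha>) > real d * 1" using ab d1 by (intro mult_strict_left_mono) (auto simp: mult.commute)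
    then show ?thesis unfolding p_def by (simp add: mult.assoc)
  qed
  define K where "K = snd cC powr \<alpha> * 2 * (1 + real d) ^ (d - 1)"
  have sg: "summable (\<lambda>n. K * real n powr p)"
    using summable_real_powr_iff[of p] p by (intro summable_mult) simp
  show ?thesis
  proof (rule summable_comparison_test_ev[OF _ sg])
    show "\<forall>\<^sub>F n in sequentially. norm (wa \<alpha> n) \<le> K * real n powr p"
      using eventually_ge_at_top[of 1]
    proof eventually_elim
      case (elim n)
      have np: "real n > 0" using elim by simp
      have mp: "\<mu> n > 0" using mu_pos[OF elim] .
      have "\<mu> n powr \<alpha> \<le> (snd cC * real n powr (- (real d * \<beta>))) powr \<alpha>"
        using cC(4)[OF elim] mp a0 by (intro powr_mono2) auto
      also have "\<dots> = snd cC powr \<alpha> * real n powr (- (real d * \<beta> * \<alpha>))"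
        using cC(2) np by (simp add: powr_mult powr_powr)
      finally have m1: "\<mu> n powr \<alpha> \<le> snd cC powr \<alpha> * real n powr (- (real d * \<beta> * \<alpha>))" .
      have "real (a n) \<le> 2 * real (n + d) ^ (d - 1)"
        using hd_le[OF d1, of n] by (metis of_nat_le_iff of_nat_mult of_nat_numeral of_nat_power)
      also have "real (n + d) ^ (d - 1) \<le> ((1 + real d) * real n) ^ (d - 1)"
      proof (rule power_mono)
        have "real d * 1 \<le> real d * real n" using elim by (intro mult_left_mono) auto
        then show "real (n + d) \<le> (1 + real d) * real n" using elim by (simp add: algebra_simps)
      qed simp
      also have "((1 + real d) * real n) ^ (d - 1) = (1 + real d) ^ (d - 1) * real n powr (real d - 1)"
        using np d1 by (simp add: power_mult_distrib powr_realpow[symmetric] of_nat_diff)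
      finally have a1: "real (a n) \<le> 2 * ((1 + real d) ^ (d - 1) * real n powr (real d - 1))" by simp
      have "wa \<alpha> n = \<mu> n powr \<alpha> * real (a n)" using mp by (simp add: wa_def)
      also have "\<dots> \<le> (snd cC powr \<alpha> * real n powr (- (real d * \<beta> * \<alpha>))) *
                     (2 * ((1 + real d) ^ (d - 1) * real n powr (real d - 1)))"
        by (intro mult_mono m1 a1) auto
      also have "\<dots> = K * (real n powr (- (real d * \<beta> * \<alpha>)) * real n powr (real d - 1))"
        by (simp add: K_def mult_ac)
      also have "real n powr (- (real d * \<beta> * \<alpha>)) * real n powr (real d - 1) = real n powr p"
        unfolding p_def by (simp add: powr_add[symmetric])
      finally show ?case using wa_nonneg[of \<alpha> n] by simp
    qed
  qed
qed

context
  fixes lam :: "nat \<Rightarrow> real" and e :: "nat \<Rightarrow> real^'n \<Rightarrow> real"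
  assumes ss: "spectral_system sig (\<lambda>x y. f (x \<bullet> y)) lam e"
begin

lemma ss_expand1: "AE x in sig. e i x = (\<Sum>j\<in>Jv (lam i). cf (e i) (fst j) (snd j) * Yj j x)"
  unfolding Jv_def[OF ss_pos[OF ss]]
proof (rule span_Y[OF Fv_finite[OF ss_pos[OF ss]] ss_sqi[OF ss]])
  fix n l assume l: "l < a n" and n: "n \<notin> Fv (lam i)"
  then have "\<mu> n \<noteq> lam i" by (simp add: Fv_def[OF ss_pos[OF ss]])
  then show "cf (e i) n l = 0" by (rule ss_cf0[OF ss l])
qed

lemma ss_expand: "AE x in sig. \<forall>i. e i x = (\<Sum>j\<in>Jv (lam i). cf (e i) (fst j) (snd j) * Yj j x)"
  unfolding AE_all_countable by (intro allI ss_expand1)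

lemma ss_rows:
  assumes eq: "lam i' = lam i"
  shows "(\<Sum>j\<in>Jv (lam i). cf (e i) (fst j) (snd j) * cf (e i') (fst j) (snd j)) = (if i = i' then 1 else 0)"
proof -
  have v: "lam i > 0" by (rule ss_pos[OF ss])
  have "(\<integral>x. e i' x * e i x \<partial>sig) = (\<Sum>j\<in>Jv (lam i). cf (e i) (fst j) (snd j) * (\<integral>x. e i' x * Yj j x \<partial>sig))"
    by (rule integral_expand_AE[OF Jv_finite[OF v] ss_expand1 ss_meas[OF ss] ss_sqi[OF ss]])
       (use Jv_mem[OF v] Y_sqi in auto)
  also have "\<dots> = (\<Sum>j\<in>Jv (lam i). cf (e i) (fst j) (snd j) * cf (e i') (fst j) (snd j))"
    by (simp add: cf_def mult.commute)
  finally show ?thesis using ss_on[OF ss, of i' i] by auto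
qed

lemma ss_partial:
  assumes x: "x \<in> SS" and P: "\<forall>i. e i x = (\<Sum>j\<in>Jv (lam i). cf (e i) (fst j) (snd j) * Yj j x)"
    and al: "\<alpha> > 1 / \<beta>"
  shows "(\<Sum>i<N. lam i powr \<alpha> * (e i x)\<^sup>2) \<le> suminf (wa \<alpha>)"
proof -
  define V where "V = lam ` {..<N}"
  have V: "finite V" unfolding V_def by simp
  have Vp: "v \<in> V \<Longrightarrow> v > 0" for v using ss_pos[OF ss] by (auto simp: V_def)
  have "(\<Sum>i<N. lam i powr \<alpha> * (e i x)\<^sup>2) = (\<Sum>v\<in>V. \<Sum>i\<in>{i\<in>{..<N}. lam i = v}. lam i powr \<alpha> * (e i x)\<^sup>2)"
    unfolding V_def by (rule sum.image_gen) simp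
  also have "\<dots> \<le> (\<Sum>v\<in>V. \<Sum>n\<in>Fv v. wa \<alpha> n)"
  proof (rule sum_mono)
    fix v assume vV: "v \<in> V"
    have v: "v > 0" using Vp[OF vV] .
    define I where "I = {i\<in>{..<N}. lam i = v}"
    have I: "finite I" unfolding I_def by simp
    have "(\<Sum>i\<in>I. lam i powr \<alpha> * (e i x)\<^sup>2) = v powr \<alpha> * (\<Sum>i\<in>I. (e i x)\<^sup>2)"
      by (simp add: I_def sum_distrib_left)
    also have "(\<Sum>i\<in>I. (e i x)\<^sup>2) = (\<Sum>i\<in>I. (\<Sum>j\<in>Jv v. Yj j x * cf (e i) (fst j) (snd j))\<^sup>2)"
      using P by (intro sum.cong refl) (auto simp: I_def mult.commute)
    also have "\<dots> \<le> (\<Sum>j\<in>Jv v. (Yj j x)\<^sup>2)"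
    proof (rule bessel_finite[OF I Jv_finite[OF v]])
      fix i i' assume i: "i \<in> I" and i': "i' \<in> I"
      then have "lam i = v" "lam i' = v" by (auto simp: I_def)
      then show "(\<Sum>j\<in>Jv v. cf (e i) (fst j) (snd j) * cf (e i') (fst j) (snd j)) = (if i = i' then 1 else 0)"
        using ss_rows[of i' i] by simp
    qed
    also have "(\<Sum>j\<in>Jv v. (Yj j x)\<^sup>2) = real (card (Jv v))"
      using Gv_val[OF v x] by (simp add: Gv_def[OF v])
    also have "\<dots> = (\<Sum>n\<in>Fv v. real (a n))"
      using card_Jset[OF Fv_finite[OF v]] by (simp add: Jv_def[OF v])
    finally have "(\<Sum>i\<in>I. lam i powr \<alpha> * (e i x)\<^sup>2) \<le> v powr \<alpha> * (\<Sum>n\<in>Fv v. real (a n))"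
      by (simp add: mult_left_mono)
    also have "\<dots> = (\<Sum>n\<in>Fv v. wa \<alpha> n)"
      using v by (simp add: sum_distrib_left wa_def Fv_def[OF v])
    finally show "(\<Sum>i\<in>{i\<in>{..<N}. lam i = v}. lam i powr \<alpha> * (e i x)\<^sup>2) \<le> (\<Sum>n\<in>Fv v. wa \<alpha> n)"
      by (simp add: I_def)
  qed
  also have "\<dots> = sum (wa \<alpha>) (\<Union>v\<in>V. Fv v)"
    by (rule sum.UNION_disjoint[symmetric]) (use V Fv_finite Vp in \<open>auto simp: Fv_def\<close>)
  also have "\<dots> \<le> suminf (wa \<alpha>)"
    by (rule sum_le_suminf[OF wa_summable[OF al]]) (use V Fv_finite Vp wa_nonneg in auto)
  finally show ?thesis .
qed

lemma ss_M_fin: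
  assumes al: "\<alpha> > 1 / \<beta>"
  shows "embedding_M sig lam e \<alpha> < top"
proof -
  define B where "B = suminf (wa \<alpha>)"
  have B0: "B \<ge> 0" unfolding B_def by (rule suminf_nonneg[OF wa_summable[OF al] wa_nonneg])
  have "AE x in sig. (\<Sum>i. ennreal (lam i powr \<alpha> * (e i x)\<^sup>2)) \<le> (ennreal (sqrt B))\<^sup>2"
    using ss_expand
  proof (rule AE_mp, intro AE_I2 impI)
    fix x assume x: "x \<in> space sig" and P: "\<forall>i. e i x = (\<Sum>j\<in>Jv (lam i). cf (e i) (fst j) (snd j) * Yj j x)"
    have "(\<Sum>i. ennreal (lam i powr \<alpha> * (e i x)\<^sup>2)) = (SUP N. \<Sum>i<N. ennreal (lam i powr \<alpha> * (e i x)\<^sup>2))"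
      by (rule suminf_eq_SUP)
    also have "\<dots> \<le> ennreal B"
    proof (rule SUP_least)
      fix N
      have "(\<Sum>i<N. ennreal (lam i powr \<alpha> * (e i x)\<^sup>2)) = ennreal (\<Sum>i<N. lam i powr \<alpha> * (e i x)\<^sup>2)"
        by (rule sum_ennreal) simp
      also have "\<dots> \<le> ennreal B"
        using ss_partial[OF _ P al, of N] x unfolding B_def by (intro ennreal_leI) simp
      finally show "(\<Sum>i<N. ennreal (lam i powr \<alpha> * (e i x)\<^sup>2)) \<le> ennreal B" .
    qed
    also have "ennreal B = (ennreal (sqrt B))\<^sup>2"
      using B0 by (simp add: ennreal_power)
    finally show "(\<Sum>i. ennreal (lam i powr \<alpha> * (e i x)\<^sup>2)) \<le> (ennreal (sqrt B))\<^sup>2" .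
  qed
  then have "embedding_M sig lam e \<alpha> \<le> ennreal (sqrt B)"
    unfolding embedding_M_def by (intro Inf_lower) simp
  then show ?thesis using ennreal_less_top order.strict_trans1 by blast
qed

lemma ss_index: "embedding_index sig lam e \<beta> = 1 / \<beta>"
proof -
  define A where "A = {\<alpha> \<in> {1/\<beta>..1}. embedding_M sig lam e \<alpha> < top}"
  have bp: "\<beta> > 0" and b1: "1 / \<beta> < 1" using beta by auto
  have sub: "{1/\<beta><..1} \<subseteq> A" unfolding A_def using ss_M_fin by auto
  have lb: "\<alpha> \<ge> 1 / \<beta>" if "\<alpha> \<in> A" for \<alpha> using that by (simp add: A_def)
  have ne: "A \<noteq> {}" using sub b1 by auto
  have bdd: "bdd_below A" using lb by (auto simp: bdd_below_def)
  have "Inf A \<ge> 1 / \<beta>" by (rule cInf_greatest[OF ne lb])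
  moreover have "Inf A \<le> 1 / \<beta>"
  proof (rule field_le_epsilon)
    fix \<epsilon> :: real assume eps: "\<epsilon> > 0"
    define t where "t = 1 / \<beta> + min \<epsilon> (1 - 1 / \<beta>)"
    have "t \<in> A" using sub eps b1 unfolding t_def by auto
    then have "Inf A \<le> t" by (rule cInf_lower[OF _ bdd])
    also have "t \<le> 1 / \<beta> + \<epsilon>" unfolding t_def by simp
    finally show "Inf A \<le> 1 / \<beta> + \<epsilon>" .
  qed
  ultimately show ?thesis unfolding embedding_index_def A_def[symmetric] by simp
qed

end

end


lemma nat_floor_le: "0 \<le> X \<Longrightarrow> real (nat \<lfloor>X\<rfloor>) \<le> X"
proof -
  assume X: "0 \<le> X"
  then have "real (nat \<lfloor>X\<rfloor>) = real_of_int \<lfloor>X\<rfloor>" by simp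
  also have "\<dots> \<le> X" by (rule of_int_floor_le)
  finally show ?thesis .
qed

lemma nat_floor_gt: "0 \<le> X \<Longrightarrow> X - 1 < real (nat \<lfloor>X\<rfloor>)"
proof -
  assume X: "0 \<le> X"
  then have "real (nat \<lfloor>X\<rfloor>) = real_of_int \<lfloor>X\<rfloor>" by simp
  moreover have "X < real_of_int \<lfloor>X\<rfloor> + 1" by (rule real_of_int_floor_add_one_gt)
  ultimately show ?thesis by simp
qed

context sph
begin

lemma n_lower:
  assumes n: "n \<ge> 1" and t: "t > 0" and nb: "real n \<le> (fst cC / t) powr (1 / (real d * \<beta>))"
  shows "\<mu> n \<ge> t"
proof -
  have db: "real d * \<beta> > 0" using d1 beta by simp
  have np: "real n > 0" using n by simp
  have "real n powr (real d * \<beta>) \<le> ((fst cC / t) powr (1 / (real d * \<beta>))) powr (real d * \<beta>)"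
    using nb np db by (intro powr_mono2) auto
  also have "\<dots> = fst cC / t" using db cC(1) t d1 beta by (simp add: powr_powr)
  finally have "real n powr (real d * \<beta>) \<le> fst cC / t" .
  then have "t \<le> fst cC / real n powr (real d * \<beta>)" using t np by (simp add: field_simps)
  also have "\<dots> = fst cC * real n powr (- (real d * \<beta>))" by (simp add: powr_minus divide_inverse)
  also have "\<dots> \<le> \<mu> n" by (rule cC(3)[OF n])
  finally show ?thesis .
qed

lemma Fge_sub: "t > 0 \<Longrightarrow> Fge t \<subseteq> {..<nat \<lfloor>(snd cC / t) powr (1 / (real d * \<beta>))\<rfloor> + 1}"
proof
  fix n assume t: "t > 0" and n: "n \<in> Fge t"
  show "n \<in> {..<nat \<lfloor>(snd cC / t) powr (1 / (real d * \<beta>))\<rfloor> + 1}"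
  proof (cases "n = 0")
    case False
    then have "real n \<le> (snd cC / t) powr (1 / (real d * \<beta>))"
      using n_bound[OF _ t] n by (simp add: Fge_def)
    then have "n \<le> nat \<lfloor>(snd cC / t) powr (1 / (real d * \<beta>))\<rfloor>" by (rule le_nat_floor)
    then show ?thesis by simp
  qed simp
qed

lemma Fge_sup: "t > 0 \<Longrightarrow> {1..nat \<lfloor>(fst cC / t) powr (1 / (real d * \<beta>))\<rfloor>} \<subseteq> Fge t"
proof
  fix n assume t: "t > 0" and n: "n \<in> {1..nat \<lfloor>(fst cC / t) powr (1 / (real d * \<beta>))\<rfloor>}"
  then have n1: "n \<ge> 1" and "n \<le> nat \<lfloor>(fst cC / t) powr (1 / (real d * \<beta>))\<rfloor>" by auto
  then have "real n \<le> real (nat \<lfloor>(fst cC / t) powr (1 / (real d * \<beta>))\<rfloor>)" by simp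
  also have "\<dots> \<le> (fst cC / t) powr (1 / (real d * \<beta>))" by (rule nat_floor_le) simp
  finally have "real n \<le> (fst cC / t) powr (1 / (real d * \<beta>))" .
  then show "n \<in> Fge t" using n_lower[OF n1 t] by (simp add: Fge_def)
qed

definition SAf :: "real \<Rightarrow> nat" where "SAf t = (\<Sum>n\<in>Fge t. a n)"

lemma sum_Fge_upper:
  assumes t: "t > 0"
  shows "real (SAf t) \<le> 2 * (real (nat \<lfloor>(snd cC / t) powr (1 / (real d * \<beta>))\<rfloor>) + 1 + real d) ^ d"
proof -
  define M where "M = nat \<lfloor>(snd cC / t) powr (1 / (real d * \<beta>))\<rfloor> + 1"
  have "(\<Sum>n\<in>Fge t. a n) \<le> (\<Sum>n<M. a n)"
    using Fge_sub[OF t] unfolding M_def by (intro sum_mono2) auto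
  also have "\<dots> \<le> 2 * (M + d) ^ d" by (rule hd_sum_upper)
  finally have "SAf t \<le> 2 * (M + d) ^ d" by (simp only: SAf_def)
  then have "real (SAf t) \<le> real (2 * (M + d) ^ d)" by (simp only: of_nat_le_iff)
  also have "real (2 * (M + d) ^ d) = 2 * (real (nat \<lfloor>(snd cC / t) powr (1 / (real d * \<beta>))\<rfloor>) + 1 + real d) ^ d"
    by (simp add: M_def algebra_simps)
  finally show ?thesis .
qed

lemma sum_Fge_lower:
  assumes t: "t > 0"
  shows "real (SAf t) \<ge> (real (nat \<lfloor>(fst cC / t) powr (1 / (real d * \<beta>))\<rfloor>) / real d) ^ d - 1"
proof -
  define M where "M = nat \<lfloor>(fst cC / t) powr (1 / (real d * \<beta>))\<rfloor>"
  have s1: "(\<Sum>n\<in>{1..M}. a n) \<le> (\<Sum>n\<in>Fge t. a n)"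
    using Fge_sup[OF t] Fge_finite[OF t] unfolding M_def by (intro sum_mono2) auto
  have "{..<Suc M} = insert 0 {1..M}" by auto
  then have "(\<Sum>n<Suc M. a n) = a 0 + (\<Sum>n\<in>{1..M}. a n)" by simp
  also have "a 0 = 1" by (simp add: hd_alt)
  finally have s2: "(\<Sum>n<Suc M. a n) = 1 + (\<Sum>n\<in>{1..M}. a n)" .
  have s3: "(\<Sum>n<Suc M. a n) \<le> 1 + SAf t" using s1 s2 by (simp add: SAf_def)
  have "(real M / real d) ^ d \<le> real (\<Sum>n<Suc M. a n)" by (rule hd_sum_lower[OF d1])
  also have "\<dots> \<le> real (1 + SAf t)" using s3 by (simp only: of_nat_le_iff)
  also have "\<dots> = 1 + real (SAf t)" by simp
  finally show ?thesis unfolding M_def by simp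
qed

context
  fixes lam :: "nat \<Rightarrow> real" and e :: "nat \<Rightarrow> real^'n \<Rightarrow> real"
  assumes ss: "spectral_system sig (\<lambda>x y. f (x \<bullet> y)) lam e"
begin

lemma lam_le0: "lam i \<le> lam 0"
  using ss_anti[OF ss] by (simp add: antimono_def)

lemma card_ge_i: "real (Suc i) \<le> real (SAf (lam i))"
proof -
  have t: "lam i > 0" by (rule ss_pos[OF ss])
  have "{..i} \<subseteq> {i'. lam i' \<ge> lam i}" using ss_anti[OF ss] by (auto simp: antimono_def)
  then have "card {..i} \<le> card {i'. lam i' \<ge> lam i}" by (rule card_mono[OF ss_finite(1)[OF ss t]])
  then have "Suc i \<le> SAf (lam i)" using ss_card[OF ss t] by (simp add: SAf_def)
  then show ?thesis by (simp only: of_nat_le_iff)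
qed

lemma lam_upper: "\<exists>C>0. \<forall>i. lam i \<le> C * real (Suc i) powr (- \<beta>)"
proof -
  define L where "L = lam 0"
  have L: "L > 0" unfolding L_def by (rule ss_pos[OF ss])
  have db: "real d * \<beta> > 0" using d1 beta by simp
  define R0 where "R0 = (snd cC / L) powr (1 / (real d * \<beta>))"
  have R0: "R0 > 0" unfolding R0_def using cC(2) L by simp
  define K1 where "K1 = 1 + (1 + real d) / R0"
  have K1: "K1 > 0" unfolding K1_def using R0 by (simp add: add_pos_nonneg)
  define A where "A = 2 * K1 ^ d"
  have A: "A > 0" unfolding A_def using K1 by simp
  define C where "C = A powr \<beta> * snd cC"
  have C: "C > 0" unfolding C_def using A cC(2) by simp
  show ?thesis
  proof (intro exI conjI allI)
    show "C > 0" by (rule C)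
    fix i
    define t where "t = lam i"
    have t: "t > 0" unfolding t_def by (rule ss_pos[OF ss])
    have tL: "t \<le> L" unfolding t_def L_def by (rule lam_le0)
    define R where "R = (snd cC / t) powr (1 / (real d * \<beta>))"
    have RR0: "R0 \<le> R" unfolding R_def R0_def
      using t tL cC(2) db by (intro powr_mono2) (auto simp: divide_left_mono)
    have Rp: "R > 0" using R0 RR0 by simp
    define q where "q = real (Suc i)"
    have q: "q \<ge> 1" unfolding q_def by simp
    have "q \<le> 2 * (real (nat \<lfloor>R\<rfloor>) + 1 + real d) ^ d"
      using card_ge_i[of i] sum_Fge_upper[OF t] unfolding q_def R_def t_def by linarith
    also have "real (nat \<lfloor>R\<rfloor>) + 1 + real d \<le> K1 * R"
    proof -
      have "real (nat \<lfloor>R\<rfloor>) \<le> R" using Rp by (intro nat_floor_le) simp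
      moreover have "(1 + real d) \<le> (1 + real d) / R0 * R"
      proof -
        have "(1 + real d) / R0 * R0 \<le> (1 + real d) / R0 * R"
          using RR0 R0 by (intro mult_left_mono) auto
        then show ?thesis using R0 by simp
      qed
      ultimately show ?thesis unfolding K1_def by (simp add: algebra_simps)
    qed
    then have "2 * (real (nat \<lfloor>R\<rfloor>) + 1 + real d) ^ d \<le> 2 * (K1 * R) ^ d"
      by (intro mult_left_mono power_mono) auto
    also have "(K1 * R) ^ d = K1 ^ d * (snd cC / t) powr (1 / \<beta>)"
    proof -
      have "R ^ d = R powr real d" using Rp by (simp add: powr_realpow)
      also have "\<dots> = (snd cC / t) powr (1 / \<beta>)"
        unfolding R_def using d1 by (simp add: powr_powr)
      finally show ?thesis by (simp add: power_mult_distrib)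
    qed
    finally have qA: "q \<le> A * (snd cC / t) powr (1 / \<beta>)" by (simp add: A_def mult.assoc)
    have bp: "\<beta> > 0" using beta by simp
    have "q powr \<beta> \<le> (A * (snd cC / t) powr (1 / \<beta>)) powr \<beta>"
      using qA q bp by (intro powr_mono2) auto
    also have "\<dots> = A powr \<beta> * (snd cC / t)"
      using A t cC(2) bp by (simp add: powr_mult powr_powr)
    finally have "q powr \<beta> \<le> A powr \<beta> * (snd cC / t)" .
    then have "t * q powr \<beta> \<le> C" using t by (simp add: C_def field_simps)
    then have "t \<le> C / q powr \<beta>" using q by (simp add: field_simps)
    then show "lam i \<le> C * real (Suc i) powr (- \<beta>)"
      unfolding t_def q_def by (simp add: powr_minus divide_inverse)
  qed
qed

lemma lam_lower: "\<exists>c>0. \<forall>i. c * real (Suc i) powr (- \<beta>) \<le> lam i"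
proof -
  have db: "real d * \<beta> > 0" using d1 beta by simp
  have bp: "\<beta> > 0" using beta by simp
  define l0 where "l0 = 2 * real d + 1"
  have l0: "l0 > 1" unfolding l0_def using d1 by simp
  define c where "c = fst cC * l0 powr (- (real d * \<beta>))"
  have c: "c > 0" unfolding c_def using cC(1) l0 by simp
  show ?thesis
  proof (intro exI conjI allI)
    show "c > 0" by (rule c)
    fix i
    define q where "q = real (Suc i)"
    have q: "q \<ge> 1" unfolding q_def by simp
    define s where "s = c * q powr (- \<beta>)"
    have s: "s > 0" unfolding s_def using c q by simp
    show "c * real (Suc i) powr (- \<beta>) \<le> lam i"
    proof (rule ccontr)
      assume "\<not> ?thesis"
      then have ls: "lam i < s" unfolding s_def q_def by simp
      have "{i'. lam i' \<ge> s} \<subseteq> {..<i}"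
      proof
        fix i' assume "i' \<in> {i'. lam i' \<ge> s}"
        then have "lam i' \<ge> s" by simp
        moreover have "i \<le> i' \<Longrightarrow> lam i' \<le> lam i" using ss_anti[OF ss] by (simp add: antimono_def)
        ultimately show "i' \<in> {..<i}" using ls by (cases "i \<le> i'") auto
      qed
      then have "card {i'. lam i' \<ge> s} \<le> i" using card_mono[of "{..<i}"] by fastforce
      then have "SAf s \<le> i" using ss_card[OF ss s] by (simp add: SAf_def)
      then have up: "real (SAf s) \<le> real i" by (simp only: of_nat_le_iff)
      define X where "X = (fst cC / s) powr (1 / (real d * \<beta>))"
      define qd where "qd = q powr (1 / real d)"
      have qd1: "qd \<ge> 1" unfolding qd_def using q d1 by (simp add: ge_one_powr_ge_zero)
      have "fst cC / s = l0 powr (real d * \<beta>) * q powr \<beta>"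
        unfolding s_def c_def using cC(1) l0 q by (simp add: powr_minus field_simps)
      then have X: "X = l0 * qd"
        unfolding X_def qd_def using l0 q db d1 beta
        by (simp add: powr_mult powr_powr)
      define M where "M = nat \<lfloor>X\<rfloor>"
      have X0: "X \<ge> 0" unfolding X_def by simp
      have XM: "real M \<ge> X - 1" unfolding M_def using nat_floor_gt[OF X0] by linarith
      have "l0 * qd - 1 = 2 * real d * qd + (qd - 1)" by (simp add: l0_def algebra_simps)
      then have "real M \<ge> 2 * real d * qd" using XM X qd1 by linarith
      then have "(real M / real d) ^ d \<ge> (2 * qd) ^ d"
        using d1 qd1 by (intro power_mono) (auto simp: field_simps)
      also have "(2 * qd) ^ d = 2 ^ d * q"
      proof -
        have "qd ^ d = qd powr real d" using qd1 by (simp add: powr_realpow)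
        also have "\<dots> = q" unfolding qd_def using d1 q by (simp add: powr_powr)
        finally show ?thesis by (simp add: power_mult_distrib)
      qed
      finally have m1: "(real M / real d) ^ d \<ge> 2 ^ d * q" .
      have "2 ^ d \<ge> (2::real)" using d1 by (metis power_one_right power_increasing one_le_numeral)
      then have "2 ^ d * q \<ge> 2 * q" using q by (intro mult_right_mono) auto
      then have "(real M / real d) ^ d - 1 \<ge> 2 * q - 1" using m1 by linarith
      moreover have "real (SAf s) \<ge> (real M / real d) ^ d - 1"
        using sum_Fge_lower[OF s] unfolding M_def X_def .
      ultimately show False using up q unfolding q_def by simp
    qed
  qed
qed

lemma ss_decay: "eigenvalue_decay_rate lam \<beta>"
  using lam_upper lam_lower unfolding eigenvalue_decay_rate_def by blast

end

end


theorem proposition21: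
  fixes f :: "real \<Rightarrow> real"
    and \<mu> :: "nat \<Rightarrow> real"
    and Y :: "nat \<Rightarrow> nat \<Rightarrow> real ^ 'n \<Rightarrow> real"
    and \<beta> :: real
  defines "d \<equiv> CARD('n) - 1"
  defines "\<sigma> \<equiv> (sphere_measure :: (real ^ 'n) measure)"
  defines "k \<equiv> (\<lambda>x y. f (x \<bullet> y))"
  assumes dim: "CARD('n) \<ge> 2"
    and harm: "\<And>n l. l < harm_dim d n \<Longrightarrow> Y n l \<in> sph_harm_space n"
    and orth: "\<And>n l n' l'. l < harm_dim d n \<Longrightarrow> l' < harm_dim d n' \<Longrightarrow>
                 (\<integral>x. Y n l x * Y n' l' x \<partial>\<sigma>) = (if n = n' \<and> l = l' then 1 else 0)"
    and complete: "\<And>g. g \<in> borel_measurable \<sigma> \<Longrightarrow> integrable \<sigma> (\<lambda>x. (g x)\<^sup>2) \<Longrightarrow>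
                 (\<forall>n l. l < harm_dim d n \<longrightarrow> (\<integral>x. g x * Y n l x \<partial>\<sigma>) = 0) \<Longrightarrow>
                 AE x in \<sigma>. g x = 0"
    and mercer: "\<And>x y. x \<in> sphere 0 1 \<Longrightarrow> y \<in> sphere 0 1 \<Longrightarrow>
                 (\<lambda>n. \<mu> n * (\<Sum>l<harm_dim d n. Y n l x * Y n l y)) sums k x y"
    and mu0: "\<mu> 0 \<ge> 0"
    and \<beta>: "\<beta> > 1"
    and decay: "\<exists>c C. c > 0 \<and> C > 0 \<and> (\<forall>n\<ge>1.
                 c * real n powr (- (real d * \<beta>)) \<le> \<mu> n \<and>
                 \<mu> n \<le> C * real n powr (- (real d * \<beta>)))"
  shows "(\<exists>lam e. spectral_system \<sigma> k lam e) \<and>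
         (\<forall>lam e. spectral_system \<sigma> k lam e \<longrightarrow>
            eigenvalue_decay_rate lam \<beta> \<and> embedding_index \<sigma> lam e \<beta> = 1 / \<beta>)"
  proof -
  have L: "sph f \<mu> Y \<beta> d"
  proof (unfold_locales)
    show "d = CARD('n) - 1" by (simp add: d_def)
    show "2 \<le> CARD('n)" by (rule dim)
    show "\<And>n l. l < harm_dim d n \<Longrightarrow> Y n l \<in> sph_harm_space n" by (rule harm)
    show "\<And>n l n' l'. l < harm_dim d n \<Longrightarrow> l' < harm_dim d n' \<Longrightarrow>
       (\<integral>x. Y n l x * Y n' l' x \<partial>(sphere_measure :: (real^'n) measure)) = (if n = n' \<and> l = l' then 1 else 0)"
      using orth unfolding \<sigma>_def .
    show "\<And>g. g \<in> borel_measurable (sphere_measure :: (real^'n) measure) \<Longrightarrow>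
                 integrable (sphere_measure :: (real^'n) measure) (\<lambda>x. (g x)\<^sup>2) \<Longrightarrow>
                 (\<forall>n l. l < harm_dim d n \<longrightarrow> (\<integral>x. g x * Y n l x \<partial>(sphere_measure :: (real^'n) measure)) = 0) \<Longrightarrow>
                 AE x in (sphere_measure :: (real^'n) measure). g x = 0"
      using complete unfolding \<sigma>_def .
    show "\<And>x y. x \<in> sphere 0 1 \<Longrightarrow> y \<in> sphere 0 1 \<Longrightarrow>
                 (\<lambda>n. \<mu> n * (\<Sum>l<harm_dim d n. Y n l x * Y n l y)) sums f (x \<bullet> y)"
      using mercer unfolding k_def .
    show "\<mu> 0 \<ge> 0" by (rule mu0)
    show "\<beta> > 1" by (rule \<beta>)
    show "\<exists>c C. c > 0 \<and> C > 0 \<and> (\<forall>n\<ge>1.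
                 c * real n powr (- (real d * \<beta>)) \<le> \<mu> n \<and>
                 \<mu> n \<le> C * real n powr (- (real d * \<beta>)))" by (rule decay)
  qed
  interpret sph f \<mu> Y \<beta> d by (rule L)
  show ?thesis
    unfolding \<sigma>_def k_def
    using exists_ss ss_decay ss_index by blast
qed

end
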